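(* Let $M,N\in\mathbb{N}$. The zeta function of the Motzkin shift $\mathbf M(M,N)$ is $$\zeta(\mathbf{M}(M,N),z)=\frac{2\{1-Nz+\sqrt{(1-Nz)^2-4Mz^2}\}}{\{1-(2M+N)z+\sqrt{(1-Nz)^2-4Mz^2}\}^2}.$$
   Context: Alphabet $\Sigma=\{\lambda_1,\dots,\lambda_M,\rho_1,\dots,\rho_M,1_1,\dots,1_N\}$. $\mathcal{M}(M,N)$ is the monoid with zero generated by $\Sigma$ and an identity $\mathbf{1}$, subject only to the relations $\lambda_i\rho_i=\mathbf{1}$, $\lambda_i\rho_j=0$ ($i\neq j$), each $1_i$ acts as the identity ($1_i\alpha=\alpha 1_i=\alpha$, $1_i1_j=\mathbf 1$), and $0$ is absorbing; no other relations. $\mathit{red}:\Sigma^*\to\mathcal{M}(M,N)$ sends a word to the product of its letters (empty word to $\mathbf 1$). The Motzkin shift is $\mathbf{M}(M,N)=\{x\in\Sigma^{\mathbb Z}:\mathit{red}(x_i\cdots x_j)\neq 0\ \forall i\le j\}$ with shift $\sigma$. For a subshift $X$, $p_n(X)$ is the number of points $x\in X$ with $\sigma^nx=x$, and the zeta function is $\zeta(X,z)=\exp\sum_{n\ge1}\frac{p_n(X)}{n}z^n$ (as a formal power series). *)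

theory Defs
  imports Complex_Main "HOL-Computational_Algebra.Formal_Power_Series"
begin

datatype sym = Lam nat | Rho nat | One nat

definition alphabet :: "nat \<Rightarrow> nat \<Rightarrow> sym set" where
  "alphabet M N = {Lam i | i. 1 \<le> i \<and> i \<le> M} \<union> {Rho i | i. 1 \<le> i \<and> i \<le> M}
                  \<union> {One i | i. 1 \<le> i \<and> i \<le> N}"

text \<open>Presentation of the monoid with zero: elements of the free monoid with an adjoined
  zero are represented as sym list option (None = 0, Some w = the word w, Some [] = identity).
  One-step applications (inside an arbitrary context u _ v) of the defining relations;
  the monoid is the quotient by the equivalence closure of these steps (a congruence).\<close>
inductive mstep :: "sym list option \<Rightarrow> sym list option \<Rightarrow> bool" where
  cancel: "mstep (Some (u @ [Lam i, Rho i] @ v)) (Some (u @ v))"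
| kill: "i \<noteq> j \<Longrightarrow> mstep (Some (u @ [Lam i, Rho j] @ v)) None"
| unit: "mstep (Some (u @ [One i] @ v)) (Some (u @ v))"

definition red_is_zero :: "sym list \<Rightarrow> bool" where
  "red_is_zero w \<longleftrightarrow> equivclp mstep (Some w) None"

definition motzkin_shift :: "nat \<Rightarrow> nat \<Rightarrow> (int \<Rightarrow> sym) set" where
  "motzkin_shift M N = {x. (\<forall>i. x i \<in> alphabet M N) \<and>
       (\<forall>i j. i \<le> j \<longrightarrow> \<not> red_is_zero (map x [i..j]))}"

definition shift :: "(int \<Rightarrow> sym) \<Rightarrow> (int \<Rightarrow> sym)" where
  "shift x = (\<lambda>i. x (i + 1))"

definition periodic_count :: "(int \<Rightarrow> sym) set \<Rightarrow> nat \<Rightarrow> nat" where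
  "periodic_count X n = card {x \<in> X. (shift ^^ n) x = x}"

definition zeta_fps :: "(int \<Rightarrow> sym) set \<Rightarrow> real fps" where
  "zeta_fps X = fps_exp 1 oo
     Abs_fps (\<lambda>n. if n = 0 then 0 else real (periodic_count X n) / real n)"

definition fps_sqrt1 :: "real fps \<Rightarrow> real fps" where
  "fps_sqrt1 a = fps_radical (\<lambda>_ x. sqrt x) 2 a"

end

theory Submission
  imports Defs
begin

unbundle fps_syntax


fun push :: "sym \<Rightarrow> (nat list \<times> nat list) option \<Rightarrow> (nat list \<times> nat list) option" where
  "push c None = None"
| "push (One i) (Some s) = Some s"
| "push (Rho i) (Some (r,l)) = Some (i # r, l)"
| "push (Lam i) (Some (r,l)) = (case r of [] \<Rightarrow> Some ([], i # l)
      | j # r' \<Rightarrow> if i = j then Some (r', l) else None)"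

definition act :: "sym list \<Rightarrow> (nat list \<times> nat list) option \<Rightarrow> (nat list \<times> nat list) option" where
  "act u s = foldr push u s"

definition nf :: "sym list \<Rightarrow> (nat list \<times> nat list) option" where
  "nf u = act u (Some ([],[]))"

definition ok :: "sym list \<Rightarrow> bool" where
  "ok u \<longleftrightarrow> nf u \<noteq> None"

lemma act_Nil[simp]: "act [] s = s" by (simp add: act_def)
lemma act_Cons[simp]: "act (c # u) s = push c (act u s)" by (simp add: act_def)
lemma act_append: "act (u @ v) s = act u (act v s)" by (simp add: act_def)
lemma act_None[simp]: "act u None = None" by (induction u) auto
lemma nf_Nil[simp]: "nf [] = Some ([],[])" by (simp add: nf_def)
lemma nf_Cons: "nf (c # u) = push c (nf u)" by (simp add: nf_def)
lemma nf_append: "nf (u @ v) = act u (nf v)" by (simp add: nf_def act_append)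

definition NF :: "sym list option \<Rightarrow> (nat list \<times> nat list) option" where
  "NF a = (case a of None \<Rightarrow> None | Some w \<Rightarrow> nf w)"

lemma mstep_NF: "mstep a b \<Longrightarrow> NF a = NF b"
proof (induction rule: mstep.induct)
  case (cancel u i v)
  have "act [Lam i, Rho i] s = s" for s by (cases s) auto
  then show ?case by (simp add: NF_def nf_append act_append nf_Cons)
next
  case (kill i j u v)
  have "act [Lam i, Rho j] s = None" for s using kill by (cases s) auto
  then show ?case by (simp add: NF_def nf_append act_append nf_Cons)
next
  case (unit u i v)
  have "act [One i] s = s" for s by (cases s) auto
  then show ?case by (simp add: NF_def nf_append act_append nf_Cons)
qed

lemma equivclp_NF: "equivclp mstep a b \<Longrightarrow> NF a = NF b"
  by (induction rule: equivclp_induct) (auto dest: mstep_NF)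

lemma mstep_Cons: "mstep a b \<Longrightarrow> mstep (map_option (Cons c) a) (map_option (Cons c) b)"
proof (induction rule: mstep.induct)
  case (cancel u i v) then show ?case using mstep.cancel[of "c # u" i v] by simp
next
  case (kill i j u v) then show ?case using mstep.kill[of i j "c # u" v] by simp
next
  case (unit u i v) then show ?case using mstep.unit[of "c # u" i v] by simp
qed

lemma mstep_rt_Cons: "mstep\<^sup>*\<^sup>* a b \<Longrightarrow> mstep\<^sup>*\<^sup>* (map_option (Cons c) a) (map_option (Cons c) b)"
  by (induction rule: rtranclp_induct) (auto intro: rtranclp.rtrancl_into_rtrancl mstep_Cons)

lemma nf_reduce: "nf w = Some (r,l) \<Longrightarrow> mstep\<^sup>*\<^sup>* (Some w) (Some (map Rho r @ map Lam l))"
proof (induction w arbitrary: r l)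
  case Nil then show ?case by simp
next
  case (Cons c w)
  then obtain r' l' where w: "nf w = Some (r', l')"
    by (cases "nf w") (auto simp: nf_Cons)
  have IH: "mstep\<^sup>*\<^sup>* (Some (c # w)) (Some (c # map Rho r' @ map Lam l'))"
    using mstep_rt_Cons[OF Cons.IH[OF w], of c] by simp
  show ?case
  proof (cases c)
    case (Lam i)
    show ?thesis
    proof (cases r')
      case Nil then show ?thesis using Cons.prems w IH Lam by (auto simp: nf_Cons)
    next
      case (Cons j r'')
      with Cons.prems w Lam have ij: "i = j" "r = r''" "l = l'"
        by (auto simp: nf_Cons split: if_splits)
      have "mstep (Some ([] @ [Lam i, Rho i] @ (map Rho r'' @ map Lam l'))) (Some ([] @ (map Rho r'' @ map Lam l')))"
        by (rule mstep.cancel)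
      then show ?thesis using IH Lam Cons ij by (auto intro: rtranclp.rtrancl_into_rtrancl)
    qed
  next
    case (Rho i) then show ?thesis using Cons.prems w IH by (auto simp: nf_Cons)
  next
    case (One i)
    have "mstep (Some ([] @ [One i] @ (map Rho r' @ map Lam l'))) (Some ([] @ (map Rho r' @ map Lam l')))"
      by (rule mstep.unit)
    then show ?thesis using Cons.prems w IH One by (auto simp: nf_Cons intro: rtranclp.rtrancl_into_rtrancl)
  qed
qed

lemma nf_None_reduce: "nf w = None \<Longrightarrow> mstep\<^sup>*\<^sup>* (Some w) None"
proof (induction w)
  case Nil then show ?case by simp
next
  case (Cons c w)
  show ?case
  proof (cases "nf w")
    case None
    then show ?thesis using mstep_rt_Cons[OF Cons.IH[OF None], of c] by simp
  next
    case (Some s)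
    then obtain r l where w: "nf w = Some (r,l)" by (cases s) auto
    then obtain i j r' where c: "c = Lam i" "r = j # r'" "i \<noteq> j"
      using Cons.prems
      by (cases c; cases r) (auto simp: nf_Cons split: if_splits)
    have "mstep\<^sup>*\<^sup>* (Some (c # w)) (Some (c # map Rho r @ map Lam l))"
      using mstep_rt_Cons[OF nf_reduce[OF w], of c] by simp
    moreover have "mstep (Some ([] @ [Lam i, Rho j] @ (map Rho r' @ map Lam l))) None"
      by (rule mstep.kill) (use c in auto)
    ultimately show ?thesis using c by (auto intro: rtranclp.rtrancl_into_rtrancl)
  qed
qed

lemma red_is_zero_iff: "red_is_zero w \<longleftrightarrow> \<not> ok w"
proof
  assume "red_is_zero w"
  then have "NF (Some w) = NF None" unfolding red_is_zero_def by (rule equivclp_NF)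
  then show "\<not> ok w" by (simp add: NF_def ok_def)
next
  assume "\<not> ok w"
  then have "nf w = None" unfolding ok_def by blast
  then show "red_is_zero w" unfolding red_is_zero_def
    by (intro rtranclp_into_equivclp nf_None_reduce)
qed


lemma act_prefix_r:
  "nf u = Some (r,l) \<Longrightarrow> act u (Some s) = None \<or> (\<exists>r' l'. act u (Some s) = Some (r @ r', l'))"
proof (induction u arbitrary: r l)
  case Nil then show ?case by (cases s) auto
next
  case (Cons c u)
  then obtain r1 l1 where u: "nf u = Some (r1, l1)" by (cases "nf u") (auto simp: nf_Cons)
  from Cons.IH[OF u] have IH: "act u (Some s) = None \<or> (\<exists>r' l'. act u (Some s) = Some (r1 @ r', l'))" .
  show ?case
  proof (cases c)
    case (Lam i)
    show ?thesis
    proof (cases r1)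
      case Nil then show ?thesis using Cons.prems u Lam
        by (cases "act u (Some s)") (auto simp: nf_Cons split: list.splits)
    next
      case (Cons j r2)
      then show ?thesis using Cons.prems u Lam IH
        by (auto simp: nf_Cons split: if_splits)
    qed
  next
    case (Rho i) then show ?thesis using Cons.prems u IH by (auto simp: nf_Cons)
  next
    case (One i) then show ?thesis using Cons.prems u IH by (cases "act u (Some s)") (auto simp: nf_Cons)
  qed
qed

lemma nf_None_act: "nf u = None \<Longrightarrow> act u s = None"
proof (induction u arbitrary: s)
  case Nil then show ?case by simp
next
  case (Cons c u)
  show ?case
  proof (cases "nf u")
    case None then show ?thesis using Cons.IH by simp
  next
    case (Some p)
    then obtain r l where u: "nf u = Some (r,l)" by (cases p) auto
    then obtain i j r' where c: "c = Lam i" "r = j # r'" "i \<noteq> j"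
      using Cons.prems by (cases c; cases r) (auto simp: nf_Cons split: if_splits)
    show ?thesis
    proof (cases s)
      case None then show ?thesis by simp
    next
      case (Some s')
      from act_prefix_r[OF u, of s'] show ?thesis using c Some by auto
    qed
  qed
qed

lemma ok_appendD: "ok (u @ v) \<Longrightarrow> ok u \<and> ok v"
  unfolding ok_def nf_append using nf_None_act[of u] act_None by metis

lemma ok_factor: "ok (u @ v @ w) \<Longrightarrow> ok v"
  using ok_appendD by blast

fun stp :: "sym \<Rightarrow> int" where
  "stp (Lam i) = 1" | "stp (Rho i) = -1" | "stp (One i) = 0"

definition ht :: "sym list \<Rightarrow> int" where
  "ht u = sum_list (map stp u)"

lemma ht_Nil[simp]: "ht [] = 0" by (simp add: ht_def)
lemma ht_Cons[simp]: "ht (c # u) = stp c + ht u" by (simp add: ht_def)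
lemma ht_append[simp]: "ht (u @ v) = ht u + ht v" by (simp add: ht_def)

lemma ht_take_append: "ht (take k (u @ v)) = ht (take k u) + ht (take (k - length u) v)"
  by simp

lemma ht_take_drop: "ht (take k (drop c w)) = ht (take (c + k) w) - ht (take c w)"
  by (simp add: take_add)

lemma ht_take_Suc: "k < length u \<Longrightarrow> ht (take (Suc k) u) = ht (take k u) + stp (u ! k)"
  by (simp add: take_Suc_conv_app_nth)

lemma nf_ht: "nf u = Some (r,l) \<Longrightarrow> ht u = int (length l) - int (length r)"
proof (induction u arbitrary: r l)
  case Nil then show ?case by simp
next
  case (Cons c u)
  then obtain r1 l1 where u: "nf u = Some (r1, l1)" by (cases "nf u") (auto simp: nf_Cons)
  note IH = Cons.IH[OF u]
  show ?case using Cons.prems u IH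
    by (cases c; cases r1) (auto simp: nf_Cons split: if_splits)
qed

lemma nf_min_prefix: "nf u = Some (r,l) \<Longrightarrow> \<exists>k. ht (take k u) \<le> - int (length r)"
proof (induction u arbitrary: r l)
  case Nil then show ?case by (intro exI[of _ 0]) simp
next
  case (Cons c u)
  then obtain r1 l1 where u: "nf u = Some (r1, l1)" by (cases "nf u") (auto simp: nf_Cons)
  from Cons.IH[OF u] obtain k where k: "ht (take k u) \<le> - int (length r1)" by blast
  show ?case
  proof (cases c)
    case (Lam i)
    show ?thesis
    proof (cases r1)
      case Nil then show ?thesis using Cons.prems u Lam by (intro exI[of _ 0]) (auto simp: nf_Cons)
    next
      case (Cons j r2)
      then show ?thesis using Cons.prems u Lam k
        by (intro exI[of _ "Suc k"]) (auto simp: nf_Cons split: if_splits)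
    qed
  next
    case (Rho i) then show ?thesis using Cons.prems u k
      by (intro exI[of _ "Suc k"]) (auto simp: nf_Cons)
  next
    case (One i) then show ?thesis using Cons.prems u k
      by (intro exI[of _ "Suc k"]) (auto simp: nf_Cons)
  qed
qed

lemma nf_nonneg_prefix:
  assumes "ok u" "\<forall>k. 0 \<le> ht (take k u)"
  shows "\<exists>l. nf u = Some ([], l)"
proof -
  obtain r l where u: "nf u = Some (r,l)" using assms(1) unfolding ok_def by auto
  from nf_min_prefix[OF u] obtain k where "ht (take k u) \<le> - int (length r)" by blast
  with assms(2) have "r = []" by (metis add.inverse_inverse le_minus_iff length_greater_0_conv
        linorder_not_le neg_0_le_iff_le of_nat_0_less_iff order.strict_trans1 zero_less_iff_neq_zero)
  with u show ?thesis by blast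
qed

lemma act_pure_rho: "nf u = Some (r, []) \<Longrightarrow> act u (Some (r0, l0)) = Some (r @ r0, l0)"
proof (induction u arbitrary: r)
  case Nil then show ?case by simp
next
  case (Cons c u)
  then obtain r1 l1 where u: "nf u = Some (r1, l1)" by (cases "nf u") (auto simp: nf_Cons)
  show ?case
  proof (cases c)
    case (Lam i)
    show ?thesis
    proof (cases r1)
      case Nil then show ?thesis using Cons.prems u Lam by (auto simp: nf_Cons)
    next
      case (Cons j r2)
      then show ?thesis using Cons.prems u Lam Cons.IH
        by (auto simp: nf_Cons split: if_splits)
    qed
  next
    case (Rho i) then show ?thesis using Cons.prems u Cons.IH by (auto simp: nf_Cons)
  next
    case (One i) then show ?thesis using Cons.prems u Cons.IH by (auto simp: nf_Cons)
  qed
qed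

lemma act_pure_lam: "act u (Some ([], l0)) = map_option (\<lambda>(r,l). (r, l @ l0)) (nf u)"
proof (induction u)
  case Nil then show ?case by simp
next
  case (Cons c u)
  show ?case
  proof (cases "nf u")
    case None then show ?thesis using Cons.IH by (simp add: nf_Cons)
  next
    case (Some p)
    then obtain r l where u: "nf u = Some (r,l)" by (cases p) auto
    then show ?thesis using Cons.IH by (cases c; cases r) (auto simp: nf_Cons)
  qed
qed

lemma ok_append_lam: "ok u \<Longrightarrow> nf v = Some ([], l) \<Longrightarrow> ok (u @ v)"
  unfolding ok_def nf_append by (simp add: act_pure_lam)

fun swp :: "sym \<Rightarrow> sym" where
  "swp (Lam i) = Rho i" | "swp (Rho i) = Lam i" | "swp (One i) = One i"

definition mir :: "sym list \<Rightarrow> sym list" where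
  "mir u = rev (map swp u)"

lemma swp_swp[simp]: "swp (swp c) = c" by (cases c) auto
lemma mir_mir[simp]: "mir (mir u) = u" by (simp add: mir_def rev_map comp_def)
lemma mir_append[simp]: "mir (u @ v) = mir v @ mir u" by (simp add: mir_def)
lemma mir_Cons: "mir (c # u) = mir u @ [swp c]" by (simp add: mir_def)
lemma length_mir[simp]: "length (mir u) = length u" by (simp add: mir_def)
lemma ht_mir[simp]: "ht (mir u) = - ht u"
  by (induction u) (auto simp: mir_def, case_tac a, auto)

lemma mstep_mir: "mstep a b \<Longrightarrow> mstep (map_option mir a) (map_option mir b)"
proof (induction rule: mstep.induct)
  case (cancel u i v) then show ?case using mstep.cancel[of "mir v" i "mir u"] by (simp add: mir_def)
next
  case (kill i j u v) then show ?case using mstep.kill[of j i "mir v" "mir u"] by (simp add: mir_def)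
next
  case (unit u i v) then show ?case using mstep.unit[of "mir v" i "mir u"] by (simp add: mir_def)
qed

lemma equivclp_map:
  assumes "\<And>a b. r a b \<Longrightarrow> r (f a) (f b)" "equivclp r x y"
  shows "equivclp r (f x) (f y)"
  using assms(2)
proof (induction rule: equivclp_induct)
  case base then show ?case by simp
next
  case (step y z) then show ?case using assms(1) by (blast intro: equivclp_into_equivclp)
qed

lemma red_is_zero_mir: "red_is_zero w \<Longrightarrow> red_is_zero (mir w)"
  unfolding red_is_zero_def using equivclp_map[of mstep "map_option mir", OF mstep_mir] by fastforce

lemma ok_mir[simp]: "ok (mir w) \<longleftrightarrow> ok w"
  using red_is_zero_mir[of w] red_is_zero_mir[of "mir w"] red_is_zero_iff by auto


definition hbal :: "sym list \<Rightarrow> bool" where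
  "hbal u \<longleftrightarrow> ok u \<and> ht u = 0 \<and> (\<forall>k. 0 \<le> ht (take k u))"

definition hlb :: "sym list \<Rightarrow> bool" where
  "hlb u \<longleftrightarrow> ok u \<and> (\<forall>k. 0 < k \<and> k \<le> length u \<longrightarrow> 1 \<le> ht (take k u))"

lemma ok_Nil[simp]: "ok []" by (simp add: ok_def)
lemma hbal_Nil[simp]: "hbal []" by (simp add: hbal_def)
lemma hlb_Nil[simp]: "hlb []" by (auto simp: hlb_def)

lemma hlb_nonneg: assumes "hlb u" shows "0 \<le> ht (take k u)"
proof (cases "k = 0")
  case True then show ?thesis by simp
next
  case False
  show ?thesis
  proof (cases "k \<le> length u")
    case True
    then have "1 \<le> ht (take k u)" using assms False unfolding hlb_def by blast
    then show ?thesis by simp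
  next
    case F: False
    show ?thesis
    proof (cases "u = []")
      case True then show ?thesis by simp
    next
      case False
      then have "1 \<le> ht (take (length u) u)" using assms unfolding hlb_def by auto
      then show ?thesis using F by simp
    qed
  qed
qed

lemma hlb_ht: "hlb u \<Longrightarrow> 0 \<le> ht u"
  using hlb_nonneg[of u "length u"] by simp

lemma hlb_ht_pos: "hlb u \<Longrightarrow> u \<noteq> [] \<Longrightarrow> 1 \<le> ht u"
  unfolding hlb_def by (metis length_greater_0_conv order_refl take_all)

lemma hbal_nf: "hbal u \<Longrightarrow> nf u = Some ([],[])"
  using nf_nonneg_prefix[of u] nf_ht[of u] unfolding hbal_def by fastforce

lemma hlb_nf: "hlb u \<Longrightarrow> \<exists>l. nf u = Some ([], l)"
  using nf_nonneg_prefix[of u] hlb_nonneg[of u] unfolding hlb_def by blast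

lemma hbal_append: assumes "hbal u" "hbal v" shows "hbal (u @ v)"
proof -
  have "ok (u @ v)" using assms hbal_nf[of v] by (intro ok_append_lam) (auto simp: hbal_def)
  moreover have "0 \<le> ht (take k (u @ v))" for k
  proof (cases "k \<le> length u")
    case True then show ?thesis using assms by (simp add: hbal_def)
  next
    case False then show ?thesis using assms by (simp add: hbal_def)
  qed
  ultimately show ?thesis using assms by (simp add: hbal_def)
qed

lemma hlb_append: assumes "hlb u" "hlb v" shows "hlb (u @ v)"
proof -
  obtain l where l: "nf v = Some ([], l)" using hlb_nf[OF assms(2)] by blast
  have "ok (u @ v)" using assms l by (intro ok_append_lam) (auto simp: hlb_def)
  moreover have "1 \<le> ht (take k (u @ v))" if "0 < k" "k \<le> length (u @ v)" for k
  proof (cases "k \<le> length u")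
    case True then show ?thesis using assms that by (simp add: hlb_def)
  next
    case False
    then have "1 \<le> ht (take (k - length u) v)" using assms(2) that unfolding hlb_def by auto
    then show ?thesis using False hlb_ht[OF assms(1)] by simp
  qed
  ultimately show ?thesis by (simp add: hlb_def)
qed

lemma hbal_concat: "hbal u \<Longrightarrow> hbal (concat (replicate k u))"
  by (induction k) (auto intro: hbal_append)

lemma hlb_concat: "hlb u \<Longrightarrow> hlb (concat (replicate k u))"
  by (induction k) (auto intro: hlb_append)

lemma ht_take_Cons: "ht (take k (c # v)) = (if k = 0 then 0 else stp c + ht (take (k - 1) v))"
  by (cases k) auto

lemma stp_cases: "stp c = 1 \<or> stp c = 0 \<or> stp c = -1"
  by (cases c) auto

lemma hbal_One: "hbal v \<Longrightarrow> hbal (One i # v)"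
  unfolding hbal_def by (auto simp: ok_def nf_Cons ht_take_Cons)

lemma hbal_Lam:
  assumes a: "hbal a" and b: "hbal b"
  shows "hbal (Lam i # a @ Rho i # b)"
proof -
  have na: "nf a = Some ([],[])" and nb: "nf b = Some ([],[])" using hbal_nf a b by auto
  have "nf (Lam i # a @ Rho i # b) = Some ([],[])"
    by (simp add: nf_Cons nf_append nb act_pure_rho[OF na])
  then have "ok (Lam i # a @ Rho i # b)" by (simp add: ok_def)
  moreover have "0 \<le> ht (take k (Lam i # a @ Rho i # b))" for k
  proof (cases k)
    case 0 then show ?thesis by simp
  next
    case (Suc k')
    show ?thesis
    proof (cases "k' \<le> length a")
      case True then show ?thesis using a Suc by (simp add: hbal_def)
    next
      case False
      then have "ht (take (k' - length a) (Rho i # b)) = -1 + ht (take (k' - length a - 1) b)"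
        by (simp add: ht_take_Cons)
      then show ?thesis using a b Suc False by (simp add: hbal_def)
    qed
  qed
  ultimately show ?thesis using a b by (simp add: hbal_def)
qed

lemma hlb_Lam:
  assumes b: "hbal b" and s: "hlb s"
  shows "hlb (Lam i # b @ s)"
proof -
  have nb: "nf b = Some ([],[])" using hbal_nf b by auto
  obtain l where ns: "nf s = Some ([], l)" using hlb_nf[OF s] by blast
  have "ok (Lam i # b @ s)"
    by (simp add: ok_def nf_Cons nf_append ns act_pure_rho[OF nb])
  moreover have "1 \<le> ht (take k (Lam i # b @ s))" if k0: "0 < k" for k
  proof -
    obtain k' where k: "k = Suc k'" using k0 by (cases k) auto
    have "0 \<le> ht (take k' (b @ s))"
    proof (cases "k' \<le> length b")
      case True then show ?thesis using b by (simp add: hbal_def)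
    next
      case False then show ?thesis using b hlb_nonneg[OF s] by (simp add: hbal_def)
    qed
    then show ?thesis using k by simp
  qed
  ultimately show ?thesis by (simp add: hlb_def)
qed

lemma hbal_parse:
  assumes h: "hbal (c # v)"
  shows "(\<exists>i. c = One i \<and> hbal v) \<or> (\<exists>i a b. c = Lam i \<and> v = a @ Rho i # b \<and> hbal a \<and> hbal b)"
proof -
  have okcv: "ok (c # v)" and htcv: "ht (c # v) = 0" and pre: "\<And>k. 0 \<le> ht (take k (c # v))"
    using h by (auto simp: hbal_def)
  have pre1: "stp c \<ge> 0" using pre[of 1] by simp
  have prev: "stp c + ht (take k v) \<ge> 0" for k using pre[of "Suc k"] by simp
  have okv: "ok v" using okcv ok_appendD[of "[c]" v] by simp
  show ?thesis
  proof (cases c)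
    case (One i)
    then have "hbal v" using okv htcv prev by (simp add: hbal_def)
    then show ?thesis using One by blast
  next
    case (Rho i) then show ?thesis using pre1 by simp
  next
    case (Lam i)
    have hv: "ht v = -1" using htcv Lam by simp
    have ge: "ht (take k v) \<ge> -1" for k using prev[of k] Lam by simp
    define P where "P k \<longleftrightarrow> ht (take k v) = -1" for k
    have Pv: "P (length v)" using hv by (simp add: P_def)
    define k where "k = (LEAST k. P k)"
    have Pk: "P k" unfolding k_def by (rule LeastI[of P, OF Pv])
    have kle: "k \<le> length v" unfolding k_def by (rule Least_le) (rule Pv)
    have notP: "j < k \<Longrightarrow> \<not> P j" for j unfolding k_def by (rule not_less_Least)
    have "k \<noteq> 0"
    proof
      assume "k = 0" with Pk show False by (simp add: P_def)
    qed
    then obtain k' where k': "k = Suc k'" by (cases k) auto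
    have k'lt: "k' < length v" using kle k' by simp
    have "ht (take k' v) \<ge> 0" using notP[of k'] ge[of k'] k' by (auto simp: P_def)
    moreover have "ht (take k v) = ht (take k' v) + stp (v ! k')" using ht_take_Suc[OF k'lt] k' by simp
    ultimately have hk': "ht (take k' v) = 0" and st: "stp (v ! k') = -1"
      using Pk stp_cases[of "v ! k'"] by (auto simp: P_def)
    obtain j where vj: "v ! k' = Rho j" using st by (cases "v ! k'") auto
    define a where "a = take k' v"
    define b where "b = drop (Suc k') v"
    have v_eq: "v = a @ Rho j # b" unfolding a_def b_def using id_take_nth_drop[OF k'lt] vj by simp
    have oka: "ok a" and okb: "ok b" using okv v_eq ok_appendD[of a "Rho j # b"] ok_appendD[of "[Rho j]" b] by auto
    have ha: "hbal a"
    proof -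
      have "0 \<le> ht (take m a)" for m
      proof (cases "m < k'")
        case True
        then have "ht (take m a) = ht (take m v)" by (simp add: a_def min_def)
        moreover have "\<not> P m" using notP[of m] True k' by simp
        ultimately show ?thesis using ge[of m] by (auto simp: P_def)
      next
        case False then show ?thesis using hk' by (simp add: a_def min_def)
      qed
      then show ?thesis using oka hk' by (simp add: hbal_def a_def)
    qed
    have hb: "hbal b"
    proof -
      have "ht (take m b) = ht (take (Suc k' + m) v) - ht (take (Suc k') v)" for m
        unfolding b_def by (rule ht_take_drop)
      then have "0 \<le> ht (take m b)" for m using ge[of "Suc k' + m"] Pk k' by (simp add: P_def)
      moreover have "ht b = 0" using hv v_eq ha by (simp add: hbal_def)
      ultimately show ?thesis using okb by (simp add: hbal_def)
    qed
    have "i = j"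
    proof (rule ccontr)
      assume ij: "i \<noteq> j"
      have "nf (Lam i # a @ Rho j # b) = None"
        using ij by (simp add: nf_Cons nf_append hbal_nf[OF hb] act_pure_rho[OF hbal_nf[OF ha]])
      then show False using okcv Lam v_eq by (simp add: ok_def)
    qed
    then show ?thesis using Lam v_eq ha hb by blast
  qed
qed

lemma hlb_parse:
  assumes h: "hlb u" and ne: "u \<noteq> []"
  shows "\<exists>i b s. u = Lam i # b @ s \<and> hbal b \<and> hlb s"
proof -
  obtain c v where u: "u = c # v" using ne by (cases u) auto
  have oku: "ok u" using h by (simp add: hlb_def)
  have "1 \<le> ht (take 1 u)" using h u unfolding hlb_def by auto
  then obtain i where c: "c = Lam i" using u by (cases c) auto
  have okv: "ok v" using oku u ok_appendD[of "[c]" v] by simp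
  have prev: "0 \<le> ht (take k v)" for k
  proof (cases "k \<le> length v")
    case True
    then have "1 \<le> ht (take (Suc k) u)" using h u unfolding hlb_def by auto
    then show ?thesis using u c by simp
  next
    case False
    then have "1 \<le> ht (take (Suc (length v)) u)" using h u unfolding hlb_def by auto
    then show ?thesis using u c False by simp
  qed
  define P where "P k \<longleftrightarrow> k \<le> length v \<and> ht (take k v) = 0" for k
  have P0: "P 0" by (simp add: P_def)
  have bnd: "P k \<Longrightarrow> k \<le> length v" for k by (simp add: P_def)
  define k where "k = (GREATEST k. P k)"
  have Pk: "P k" unfolding k_def by (rule GreatestI_nat[of P 0 "length v"]) (use P0 bnd in auto)
  have gr: "P j \<Longrightarrow> j \<le> k" for j unfolding k_def by (rule Greatest_le_nat[of P j "length v"]) (use bnd in auto)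
  define b where "b = take k v"
  define s where "s = drop k v"
  have oks: "ok b" "ok s" using okv ok_appendD[of b s] by (auto simp: b_def s_def)
  have hb: "hbal b"
  proof -
    have "ht (take m b) = ht (take (min m k) v)" for m by (simp add: b_def min_def)
    then show ?thesis using prev Pk oks by (simp add: hbal_def P_def b_def)
  qed
  have hs: "hlb s"
  proof -
    have "1 \<le> ht (take m s)" if "0 < m" "m \<le> length s" for m
    proof -
      have e: "ht (take m s) = ht (take (k + m) v) - ht (take k v)"
        unfolding s_def by (rule ht_take_drop)
      have "\<not> P (k + m)" using gr[of "k+m"] that by auto
      then have "ht (take (k + m) v) \<noteq> 0" using that by (simp add: P_def s_def)
      then show ?thesis using e prev[of "k+m"] Pk by (simp add: P_def)
    qed
    then show ?thesis using oks by (simp add: hlb_def)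
  qed
  have "u = Lam i # b @ s" using u c by (simp add: b_def s_def)
  then show ?thesis using hb hs by blast
qed

lemma hbal_split_inj:
  assumes "hbal a" "hbal a'" "a @ Rho i # b = a' @ Rho i' # b'"
  shows "a = a' \<and> i = i' \<and> b = b'"
proof -
  have *: False if "hbal a" "hbal a'" "a @ Rho i # b = a' @ Rho i' # b'" "length a < length a'"
    for a a' i i' b b'
  proof -
    have "take (Suc (length a)) (a @ Rho i # b) = take (Suc (length a)) (a' @ Rho i' # b')"
      using that by simp
    then have "a @ [Rho i] = take (Suc (length a)) a'" using that(4) by simp
    then have "ht (take (Suc (length a)) a') = -1" using that(1) by (metis hbal_def ht_append ht_Cons ht_Nil stp.simps(2) add.right_neutral add_0)
    moreover have "0 \<le> ht (take (Suc (length a)) a')" using that(2) by (simp add: hbal_def)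
    ultimately show False by simp
  qed
  have "\<not> length a < length a'" using *[of a a' i b i' b'] assms by blast
  moreover have "\<not> length a' < length a" using *[of a' a i' b' i b] assms by auto
  ultimately have "length a = length a'" by linarith
  then show ?thesis using assms(3) by simp
qed

lemma hlb_split_inj:
  assumes "hbal b" "hbal b'" "hlb s" "hlb s'" "b @ s = b' @ s'"
  shows "b = b' \<and> s = s'"
proof -
  have *: False if "hbal b" "hbal b'" "hlb s" "b @ s = b' @ s'" "length b < length b'" for b b' s s'
  proof -
    define t where "t = drop (length b) b'"
    have bb': "b' = b @ t" using that(4,5) unfolding t_def
      by (metis append_eq_append_conv_if append_take_drop_id less_imp_le_nat)
    then have st: "s = t @ s'" using that(4) by simp
    have "ht t = 0" using bb' that(1,2) by (simp add: hbal_def)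
    moreover have "1 \<le> ht (take (length t) s)" using that(3,5) bb' st unfolding hlb_def by auto
    ultimately show False using st by simp
  qed
  have "\<not> length b < length b'" using *[of b b' s s'] assms by blast
  moreover have "\<not> length b' < length b" using *[of b' b s' s] assms by auto
  ultimately have "length b = length b'" by linarith
  then show ?thesis using assms(5) by simp
qed

definition fp :: "sym list \<Rightarrow> nat" where
  "fp u = (LEAST k. 0 < k \<and> hbal (drop k u))"

definition fb :: "sym list \<Rightarrow> nat" where
  "fb u = (LEAST k. 0 < k \<and> hlb (drop k u))"

lemma fp_One: assumes "hbal v" shows "fp (One i # v) = 1"
  unfolding fp_def by (rule Least_equality) (use assms in auto)

lemma fp_Lam: assumes a: "hbal a" and b: "hbal b" shows "fp (Lam i # a @ Rho i # b) = length a + 2"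
  unfolding fp_def
proof (rule Least_equality)
  show "0 < length a + 2 \<and> hbal (drop (length a + 2) (Lam i # a @ Rho i # b))" using b by simp
next
  fix k assume k: "0 < k \<and> hbal (drop k (Lam i # a @ Rho i # b))"
  show "length a + 2 \<le> k"
  proof (rule ccontr)
    assume "\<not> length a + 2 \<le> k"
    then obtain k' where k': "k = Suc k'" "k' \<le> length a" using k by (cases k) auto
    have "drop k (Lam i # a @ Rho i # b) = drop k' a @ Rho i # b" using k' by simp
    moreover have "ht a = ht (take k' a) + ht (drop k' a)" using ht_append[of "take k' a" "drop k' a"] by simp
    moreover have "0 \<le> ht (take k' a)" "ht b = 0" "ht a = 0" using a b by (auto simp: hbal_def)
    ultimately have "ht (drop k (Lam i # a @ Rho i # b)) < 0" by simp
    then show False using k by (simp add: hbal_def)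
  qed
qed

lemma fb_Lam: assumes b: "hbal b" and s: "hlb s" shows "fb (Lam i # b @ s) = length b + 1"
  unfolding fb_def
proof (rule Least_equality)
  show "0 < length b + 1 \<and> hlb (drop (length b + 1) (Lam i # b @ s))" using s by simp
next
  fix k assume k: "0 < k \<and> hlb (drop k (Lam i # b @ s))"
  show "length b + 1 \<le> k"
  proof (rule ccontr)
    assume "\<not> length b + 1 \<le> k"
    then obtain k' where k': "k = Suc k'" "k' < length b" using k by (cases k) auto
    have d: "drop k (Lam i # b @ s) = drop k' b @ s" using k' by simp
    have "ht b = ht (take k' b) + ht (drop k' b)" using ht_append[of "take k' b" "drop k' b"] by simp
    then have "ht (drop k' b) = - ht (take k' b)" using b by (simp add: hbal_def)
    then have "ht (drop k' b) \<le> 0" using b by (simp add: hbal_def)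
    moreover have "hlb (drop k' b @ s)" using k d by simp
    then have "1 \<le> ht (take (length (drop k' b)) (drop k' b @ s))"
      using k' unfolding hlb_def by (auto dest!: spec[of _ "length b - k'"])
    ultimately show False by simp
  qed
qed


definition cyc_ok :: "sym list \<Rightarrow> bool" where
  "cyc_ok w \<longleftrightarrow> (\<forall>k. ok (concat (replicate k w)))"

lemma concat_rep_rotate:
  "concat (replicate (Suc k) w) = take d w @ concat (replicate k (drop d w @ take d w)) @ drop d w"
proof (induction k)
  case 0 then show ?case by simp
next
  case (Suc k)
  have "concat (replicate (Suc (Suc k)) w) = (take d w @ drop d w) @ concat (replicate (Suc k) w)"
    by simp
  also have "\<dots> = take d w @ (drop d w @ take d w) @ concat (replicate k (drop d w @ take d w)) @ drop d w"
    using Suc by simp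
  finally show ?case by simp
qed

lemma cyc_ok_rotate: assumes "cyc_ok w" shows "cyc_ok (rotate m w)"
proof -
  define d where "d = m mod length w"
  have r: "rotate m w = drop d w @ take d w" unfolding d_def by (rule rotate_drop_take)
  have "ok (concat (replicate k (rotate m w)))" for k
  proof -
    have "ok (concat (replicate (Suc k) w))" using assms unfolding cyc_ok_def by blast
    then have "ok (take d w @ concat (replicate k (rotate m w)) @ drop d w)"
      by (simp only: concat_rep_rotate[of k w d] r)
    then show ?thesis by (rule ok_factor)
  qed
  then show ?thesis by (simp add: cyc_ok_def)
qed

lemma cyc_ok_ok: "cyc_ok w \<Longrightarrow> ok w"
  unfolding cyc_ok_def by (drule spec[of _ 1]) simp

lemma hbal_cyc: "hbal u \<Longrightarrow> cyc_ok u"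
  unfolding cyc_ok_def using hbal_concat hbal_def by blast

lemma hlb_cyc: "hlb u \<Longrightarrow> cyc_ok u"
  unfolding cyc_ok_def using hlb_concat hlb_def by blast

lemma mir_concat_rep: "mir (concat (replicate k w)) = concat (replicate k (mir w))"
proof (induction k)
  case 0 then show ?case by (simp add: mir_def)
next
  case (Suc k)
  have "concat (replicate k (mir w)) @ mir w = concat (replicate k (mir w) @ [mir w])" by simp
  also have "\<dots> = mir w @ concat (replicate k (mir w))" by (simp add: replicate_append_same)
  finally show ?case using Suc by simp
qed

lemma cyc_ok_mir: "cyc_ok w \<Longrightarrow> cyc_ok (mir w)"
  unfolding cyc_ok_def by (metis mir_concat_rep ok_mir)

lemma ht_rotate[simp]: "ht (rotate m w) = ht w"
  by (simp add: rotate_drop_take) (metis add.commute append_take_drop_id ht_append)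

lemma rot_count:
  fixes f :: "sym list \<Rightarrow> nat" and Gs Wc :: "sym list set"
  assumes n: "0 < n"
    and Gs_len: "\<And>u. u \<in> Gs \<Longrightarrow> length u = n"
    and Wc_len: "\<And>w. w \<in> Wc \<Longrightarrow> length w = n"
    and fin: "finite Gs"
    and ca: "\<And>u m. u \<in> Gs \<Longrightarrow> m < f u \<Longrightarrow> rotate m u \<in> Wc"
    and cb: "\<And>w. w \<in> Wc \<Longrightarrow> \<exists>c<n. rotate c w \<in> Gs"
    and cc: "\<And>u. u \<in> Gs \<Longrightarrow> 0 < f u \<and> f u \<le> n \<and> rotate (f u) u \<in> Gs"
    and cd: "\<And>u e. u \<in> Gs \<Longrightarrow> 0 < e \<Longrightarrow> e < f u \<Longrightarrow> rotate e u \<notin> Gs"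
  shows "card Wc = (\<Sum>u\<in>Gs. f u)"
proof -
  let ?S = "SIGMA u:Gs. {..<f u}"
  let ?h = "\<lambda>(u, m). rotate m u"
  have bk: "rotate e u' = u" if "rotate m u = rotate m' u'" "m \<le> m'" "m < n" "length u = n" "length u' = n"
    "e = m' - m" for u u' m m' e
  proof -
    have "rotate (n - m) (rotate m u) = rotate (n - m) (rotate m' u')" using that by simp
    then have "rotate (n - m + m) u = rotate (n - m + m') u'" by (simp add: rotate_rotate)
    moreover have "rotate (n - m + m) u = u" using that by (simp add: rotate_id)
    moreover have "rotate (n - m + m') u' = rotate e u'"
    proof -
      have "n - m + m' = e + n" using that by simp
      then have "rotate (n - m + m') u' = rotate e (rotate n u')" by (simp add: rotate_rotate)
      then show ?thesis using that by (simp add: rotate_id)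
    qed
    ultimately show ?thesis by simp
  qed
  have inj: "inj_on ?h ?S"
  proof (rule inj_onI)
    fix x y assume x: "x \<in> ?S" and y: "y \<in> ?S" and eq: "?h x = ?h y"
    obtain u m where xu: "x = (u, m)" by (cases x)
    obtain u' m' where yu: "y = (u', m')" by (cases y)
    have u: "u \<in> Gs" "m < f u" and u': "u' \<in> Gs" "m' < f u'" using x y xu yu by auto
    have lens: "length u = n" "length u' = n" using u u' Gs_len by auto
    have mn: "m < n" "m' < n" using u u' cc[of u] cc[of u'] by auto
    have eq': "rotate m u = rotate m' u'" using eq xu yu by simp
    show "x = y"
    proof (cases "m \<le> m'")
      case True
      have r: "rotate (m' - m) u' = u" using bk[OF eq' True mn(1) lens] by simp
      show ?thesis
      proof (cases "m' - m = 0")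
        case True then show ?thesis using r \<open>m \<le> m'\<close> xu yu by auto
      next
        case False
        then have "rotate (m' - m) u' \<notin> Gs" using cd[OF u'(1)] u'(2) by simp
        then show ?thesis using r u by simp
      qed
    next
      case False
      have r: "rotate (m - m') u = u'" using bk[OF eq'[symmetric] _ mn(2) lens(2) lens(1)] False by simp
      have "m - m' \<noteq> 0" using False by simp
      then have "rotate (m - m') u \<notin> Gs" using cd[OF u(1)] u(2) by simp
      then show ?thesis using r u' by simp
    qed
  qed
  have img: "?h ` ?S = Wc"
  proof
    show "?h ` ?S \<subseteq> Wc" using ca by auto
  next
    show "Wc \<subseteq> ?h ` ?S"
    proof
      fix w assume w: "w \<in> Wc"
      have lw: "length w = n" using Wc_len w by simp
      define K where "K = {c. c < n \<and> rotate c w \<in> Gs}"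
      have finK: "finite K" by (simp add: K_def)
      have Kne: "K \<noteq> {}" using cb[OF w] by (auto simp: K_def)
      define c where "c = (if 0 \<in> K then 0 else Max K)"
      have cK: "c \<in> K" using Kne finK by (simp add: c_def)
      then have cn: "c < n" and u: "rotate c w \<in> Gs" by (auto simp: K_def)
      define u where "u = rotate c w"
      define m where "m = (n - c) mod n"
      have rot: "rotate m u = w"
      proof -
        have "rotate m u = rotate (m + c) w" by (simp add: u_def rotate_rotate)
        moreover have "(m + c) mod length w = 0" using cn lw n
          by (simp add: m_def) (metis add.commute le_add_diff_inverse less_imp_le_nat mod_add_left_eq mod_self)
        ultimately show ?thesis by (simp add: rotate_id)
      qed
      have mf: "m < f u"
      proof (cases "c = 0")
        case True then show ?thesis using cc[of u] u by (simp add: m_def u_def)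
      next
        case False
        then have c0: "0 \<notin> K" and cmax: "c = Max K" by (auto simp: c_def split: if_splits)
        have mdef: "m = n - c" using False cn by (simp add: m_def)
        show ?thesis
        proof (rule ccontr)
          assume "\<not> m < f u"
          then have le: "f u + c \<le> n" using mdef cn by linarith
          have ru: "rotate (f u) u = rotate (f u + c) w" by (simp add: u_def rotate_rotate)
          have inG: "rotate (f u + c) w \<in> Gs" using cc[of u] u ru by (simp add: u_def)
          show False
          proof (cases "f u + c < n")
            case True
            then have "f u + c \<in> K" using inG by (simp add: K_def)
            then have "f u + c \<le> c" using cmax finK by (metis Max_ge)
            then show False using cc[of u] u by (simp add: u_def)
          next
            case False
            then have "f u + c = n" using le by simp
            then have "rotate 0 w \<in> Gs" using inG lw by (simp add: rotate_id)
            then have "0 \<in> K" using n by (simp add: K_def)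
            then show False using c0 by simp
          qed
        qed
      qed
      show "w \<in> ?h ` ?S" using rot mf u by (auto simp: u_def intro!: image_eqI[of _ _ "(u, m)"])
    qed
  qed
  have "card Wc = card ?S" using inj img by (metis card_image)
  also have "\<dots> = (\<Sum>u\<in>Gs. card {..<f u})" using fin by (simp add: card_SigmaI)
  finally show ?thesis by simp
qed


definition Bal :: "sym set \<Rightarrow> nat \<Rightarrow> sym list set" where
  "Bal A n = {u. length u = n \<and> set u \<subseteq> A \<and> hbal u}"
definition Lb :: "sym set \<Rightarrow> nat \<Rightarrow> sym list set" where
  "Lb A n = {u. length u = n \<and> set u \<subseteq> A \<and> hlb u}"
definition Wd :: "sym set \<Rightarrow> nat \<Rightarrow> sym list set" where
  "Wd A n = {w. length w = n \<and> set w \<subseteq> A \<and> cyc_ok w}"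

lemma finite_lists_A: "finite A \<Longrightarrow> finite {u. length u = n \<and> set u \<subseteq> A}"
  using finite_lists_length_eq[of A n] by (simp add: conj_commute)

lemma finite_Bal: "finite A \<Longrightarrow> finite (Bal A n)"
  by (rule finite_subset[of _ "{u. length u = n \<and> set u \<subseteq> A}"]) (auto simp: Bal_def intro: finite_lists_A)
lemma finite_Lb: "finite A \<Longrightarrow> finite (Lb A n)"
  by (rule finite_subset[of _ "{u. length u = n \<and> set u \<subseteq> A}"]) (auto simp: Lb_def intro: finite_lists_A)
lemma finite_Wd: "finite A \<Longrightarrow> finite (Wd A n)"
  by (rule finite_subset[of _ "{u. length u = n \<and> set u \<subseteq> A}"]) (auto simp: Wd_def intro: finite_lists_A)

lemma ht_take_rot:
  assumes "c < length w"
  shows "ht (take k (rotate c w)) = ht (take (c + k) w) - ht (take c w) + ht (take (min (k - (length w - c)) c) w)"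
proof -
  have "rotate c w = drop c w @ take c w" using assms by (simp add: rotate_drop_take)
  then show ?thesis by (simp add: ht_take_drop take_take)
qed

lemma hbal_ht0: "hbal u \<Longrightarrow> ht u = 0" by (simp add: hbal_def)

lemma take_len_ht: "length w \<le> j \<Longrightarrow> ht (take j w) = ht w" by simp

lemma exists_bal_rot:
  assumes n: "length w = n" "0 < n" and h: "ht w = 0" and cy: "cyc_ok w"
  shows "\<exists>c<n. hbal (rotate c w)"
proof -
  define H where "H j = ht (take j w)" for j
  define m where "m = Min (H ` {..<n})"
  have "m \<in> H ` {..<n}" unfolding m_def using n by (intro Min_in) auto
  then obtain c where c: "c < n" "H c = m" by auto
  have mle: "j < n \<Longrightarrow> m \<le> H j" for j unfolding m_def by (intro Min_le) auto
  have H0: "H 0 = 0" by (simp add: H_def)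
  have Hn: "n \<le> j \<Longrightarrow> H j = 0" for j using h n by (simp add: H_def)
  have "0 \<le> ht (take k (rotate c w))" for k
  proof -
    have e: "ht (take k (rotate c w)) = H (c + k) - H c + H (min (k - (n - c)) c)"
      using ht_take_rot[of c w k] c n by (simp add: H_def)
    show ?thesis
    proof (cases "c + k < n")
      case True
      then have "min (k - (n - c)) c = 0" by simp
      then show ?thesis using e mle[of "c+k"] c True H0 by simp
    next
      case False
      have "H (min (k - (n - c)) c) \<ge> m" using mle c by (simp add: min_def)
      then show ?thesis using e Hn[of "c+k"] False c by simp
    qed
  qed
  moreover have "ok (rotate c w)" using cyc_ok_ok[OF cyc_ok_rotate[OF cy]] .
  ultimately have "hbal (rotate c w)" using h by (simp add: hbal_def)
  then show ?thesis using c by blast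
qed

lemma exists_lb_rot:
  assumes n: "length w = n" "0 < n" and h: "0 < ht w" and cy: "cyc_ok w"
  shows "\<exists>c<n. hlb (rotate c w)"
proof -
  define H where "H j = ht (take j w)" for j
  define m where "m = Min (H ` {..<n})"
  have "m \<in> H ` {..<n}" unfolding m_def using n by (intro Min_in) auto
  then have Cne: "{j. j < n \<and> H j = m} \<noteq> {}" by auto
  define c where "c = Max {j. j < n \<and> H j = m}"
  have "c \<in> {j. j < n \<and> H j = m}" unfolding c_def using Cne by (intro Max_in) auto
  then have c: "c < n" "H c = m" by auto
  have cmax: "j < n \<Longrightarrow> H j = m \<Longrightarrow> j \<le> c" for j unfolding c_def by (intro Max_ge) auto
  have mle: "j < n \<Longrightarrow> m \<le> H j" for j unfolding m_def by (intro Min_le) auto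
  have H0: "H 0 = 0" by (simp add: H_def)
  have Hn: "n \<le> j \<Longrightarrow> H j = ht w" for j using n by (simp add: H_def)
  have "1 \<le> ht (take k (rotate c w))" if k: "0 < k" "k \<le> n" for k
  proof -
    have e: "ht (take k (rotate c w)) = H (c + k) - H c + H (min (k - (n - c)) c)"
      using ht_take_rot[of c w k] c n by (simp add: H_def)
    show ?thesis
    proof (cases "c + k < n")
      case True
      then have "min (k - (n - c)) c = 0" by simp
      moreover have "H (c + k) \<noteq> m" using cmax[of "c+k"] True k by auto
      ultimately show ?thesis using e mle[of "c+k"] c True H0 by simp
    next
      case False
      have "H (min (k - (n - c)) c) \<ge> m" using mle c by (simp add: min_def)
      moreover have "m \<le> 0" using mle[of 0] n H0 by simp
      ultimately show ?thesis using e Hn[of "c+k"] False c h by simp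
    qed
  qed
  moreover have "ok (rotate c w)" using cyc_ok_ok[OF cyc_ok_rotate[OF cy]] .
  ultimately have "hlb (rotate c w)" using n by (simp add: hlb_def)
  then show ?thesis using c by blast
qed

lemma fp_props:
  assumes u: "hbal u" "u \<noteq> []"
  shows "0 < fp u \<and> fp u \<le> length u \<and> hbal (rotate (fp u) u)"
proof -
  define P where "P k \<longleftrightarrow> 0 < k \<and> hbal (drop k u)" for k
  have Pl: "P (length u)" using u by (simp add: P_def)
  have Pk: "P (fp u)" unfolding fp_def P_def[symmetric] by (rule LeastI[of P, OF Pl])
  have kle: "fp u \<le> length u" unfolding fp_def P_def[symmetric] by (rule Least_le) (rule Pl)
  define k where "k = fp u"
  have "hbal (rotate k u)"
  proof (cases "k = length u")
    case True then show ?thesis using u by (simp add: rotate_id)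
  next
    case False
    then have kl: "k < length u" using kle k_def by simp
    then have r: "rotate k u = drop k u @ take k u" by (simp add: rotate_drop_take)
    have hd: "hbal (drop k u)" using Pk k_def by (simp add: P_def)
    have "ht u = ht (take k u) + ht (drop k u)" using ht_append[of "take k u" "drop k u"] by simp
    then have h0: "ht (take k u) = 0" using u hd by (simp add: hbal_def)
    have "ok (take k u)" using u ok_appendD[of "take k u" "drop k u"] by (simp add: hbal_def)
    moreover have "0 \<le> ht (take j (take k u))" for j using u by (simp add: hbal_def take_take)
    ultimately have "hbal (take k u)" using h0 by (simp add: hbal_def)
    then show ?thesis using r hd by (simp add: hbal_append)
  qed
  then show ?thesis using Pk kle k_def by (simp add: P_def)
qed

lemma fp_min:
  assumes u: "hbal u" "u \<noteq> []" and e: "0 < e" "e < fp u"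
  shows "\<not> hbal (rotate e u)"
proof
  assume hr: "hbal (rotate e u)"
  have hu0: "ht u = 0" and pre: "\<And>k. 0 \<le> ht (take k u)" and oku: "ok u" using u(1) unfolding hbal_def by auto
  define P where "P k \<longleftrightarrow> 0 < k \<and> hbal (drop k u)" for k
  have "fp u = (LEAST k. P k)" unfolding fp_def P_def by simp
  then have "e < (LEAST k. P k)" using e by simp
  then have "\<not> P e" by (rule not_less_Least)
  then have nd: "\<not> hbal (drop e u)" using e by (simp add: P_def)
  have el: "e < length u" using fp_props[OF u] e by simp
  have okd: "ok (drop e u)" using oku ok_appendD[of "take e u" "drop e u"] by simp
  have hu: "ht u = ht (take e u) + ht (drop e u)" using ht_append[of "take e u" "drop e u"] by simp
  have "ht (take e u) \<noteq> 0"
  proof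
    assume h0: "ht (take e u) = 0"
    have "0 \<le> ht (take j (drop e u))" for j
      using pre[of "e + j"] h0 ht_take_drop[of j e u] by simp
    moreover have "ht (drop e u) = 0" using hu h0 hu0 by simp
    ultimately have "hbal (drop e u)" using okd unfolding hbal_def by blast
    then show False using nd by simp
  qed
  then have neg: "ht (drop e u) < 0" using hu hu0 pre[of e] by simp
  have "take (length (drop e u)) (rotate e u) = drop e u" using el by (simp add: rotate_drop_take)
  moreover have "0 \<le> ht (take (length (drop e u)) (rotate e u))" using hr unfolding hbal_def by blast
  ultimately show False using neg by simp
qed

lemma fb_props:
  assumes u: "hlb u" "u \<noteq> []"
  shows "0 < fb u \<and> fb u \<le> length u \<and> hlb (rotate (fb u) u)"
proof -
  define P where "P k \<longleftrightarrow> 0 < k \<and> hlb (drop k u)" for k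
  have Pl: "P (length u)" using u by (simp add: P_def)
  have Pk: "P (fb u)" unfolding fb_def P_def[symmetric] by (rule LeastI[of P, OF Pl])
  have kle: "fb u \<le> length u" unfolding fb_def P_def[symmetric] by (rule Least_le) (rule Pl)
  define k where "k = fb u"
  have "hlb (rotate k u)"
  proof (cases "k = length u")
    case True then show ?thesis using u by (simp add: rotate_id)
  next
    case False
    then have kl: "k < length u" using kle k_def by simp
    then have r: "rotate k u = drop k u @ take k u" by (simp add: rotate_drop_take)
    have hd: "hlb (drop k u)" using Pk k_def by (simp add: P_def)
    have "ok (take k u)" using u ok_appendD[of "take k u" "drop k u"] by (simp add: hlb_def)
    moreover have "1 \<le> ht (take j (take k u))" if "0 < j" "j \<le> length (take k u)" for j
      using u that by (simp add: hlb_def take_take)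
    ultimately have "hlb (take k u)" by (simp add: hlb_def)
    then show ?thesis using r hd by (simp add: hlb_append)
  qed
  then show ?thesis using Pk kle k_def by (simp add: P_def)
qed

lemma fb_min:
  assumes u: "hlb u" "u \<noteq> []" and e: "0 < e" "e < fb u"
  shows "\<not> hlb (rotate e u)"
proof
  assume hr: "hlb (rotate e u)"
  define P where "P k \<longleftrightarrow> 0 < k \<and> hlb (drop k u)" for k
  have "e < (LEAST k. P k)" using e by (simp add: fb_def P_def)
  then have "\<not> P e" by (rule not_less_Least)
  then have nd: "\<not> hlb (drop e u)" using e by (simp add: P_def)
  have el: "e < length u" using fb_props[OF u] e by simp
  have okd: "ok (drop e u)" using u ok_appendD[of "take e u" "drop e u"] by (simp add: hlb_def)
  then obtain j where j: "0 < j" "j \<le> length (drop e u)" "\<not> 1 \<le> ht (take j (drop e u))"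
    using nd unfolding hlb_def by blast
  have "take j (rotate e u) = take j (drop e u)" using el j by (simp add: rotate_drop_take)
  then show False using hr j el unfolding hlb_def by (metis length_rotate length_drop le_trans diff_le_self)
qed

lemma W0_count:
  assumes A: "finite A" and n: "0 < n"
  shows "card {w \<in> Wd A n. ht w = 0} = (\<Sum>u\<in>Bal A n. fp u)"
proof (rule rot_count[OF n])
  show "finite (Bal A n)" using A by (rule finite_Bal)
next
  fix u assume "u \<in> Bal A n" then show "length u = n" by (simp add: Bal_def)
next
  fix w assume "w \<in> {w \<in> Wd A n. ht w = 0}" then show "length w = n" by (simp add: Wd_def)
next
  fix u m assume "u \<in> Bal A n" "m < fp u"
  then show "rotate m u \<in> {w \<in> Wd A n. ht w = 0}"
    by (auto simp: Bal_def Wd_def intro!: cyc_ok_rotate[OF hbal_cyc] dest: hbal_ht0)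
next
  fix w assume w: "w \<in> {w \<in> Wd A n. ht w = 0}"
  then obtain c where "c < n" "hbal (rotate c w)" using exists_bal_rot[of w n] n by (auto simp: Wd_def)
  then show "\<exists>c<n. rotate c w \<in> Bal A n" using w by (auto simp: Bal_def Wd_def)
next
  fix u assume u: "u \<in> Bal A n"
  then have "u \<noteq> []" using n by (auto simp: Bal_def)
  then show "0 < fp u \<and> fp u \<le> n \<and> rotate (fp u) u \<in> Bal A n"
    using fp_props[of u] u by (auto simp: Bal_def)
next
  fix u e assume u: "u \<in> Bal A n" and "0 < e" "e < fp u"
  then have "u \<noteq> []" using n by (auto simp: Bal_def)
  then show "rotate e u \<notin> Bal A n" using fp_min[of u e] u \<open>0 < e\<close> \<open>e < fp u\<close> by (auto simp: Bal_def)
qed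

lemma Wp_count:
  assumes A: "finite A" and n: "0 < n"
  shows "card {w \<in> Wd A n. 0 < ht w} = (\<Sum>u\<in>Lb A n. fb u)"
proof (rule rot_count[OF n])
  show "finite (Lb A n)" using A by (rule finite_Lb)
next
  fix u assume "u \<in> Lb A n" then show "length u = n" by (simp add: Lb_def)
next
  fix w assume "w \<in> {w \<in> Wd A n. 0 < ht w}" then show "length w = n" by (simp add: Wd_def)
next
  fix u m assume u: "u \<in> Lb A n" "m < fb u"
  then have "u \<noteq> []" using n by (auto simp: Lb_def)
  then have "0 < ht u" using u hlb_ht_pos[of u] by (simp add: Lb_def)
  then show "rotate m u \<in> {w \<in> Wd A n. 0 < ht w}" using u
    by (auto simp: Lb_def Wd_def intro!: cyc_ok_rotate[OF hlb_cyc])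
next
  fix w assume w: "w \<in> {w \<in> Wd A n. 0 < ht w}"
  then obtain c where "c < n" "hlb (rotate c w)" using exists_lb_rot[of w n] n by (auto simp: Wd_def)
  then show "\<exists>c<n. rotate c w \<in> Lb A n" using w by (auto simp: Lb_def Wd_def)
next
  fix u assume u: "u \<in> Lb A n"
  then have "u \<noteq> []" using n by (auto simp: Lb_def)
  then show "0 < fb u \<and> fb u \<le> n \<and> rotate (fb u) u \<in> Lb A n"
    using fb_props[of u] u by (auto simp: Lb_def)
next
  fix u e assume u: "u \<in> Lb A n" and "0 < e" "e < fb u"
  then have "u \<noteq> []" using n by (auto simp: Lb_def)
  then show "rotate e u \<notin> Lb A n" using fb_min[of u e] u \<open>0 < e\<close> \<open>e < fb u\<close> by (auto simp: Lb_def)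
qed

lemma set_mir: "set (mir u) = swp ` set u" by (simp add: mir_def)

lemma Wm_count:
  assumes sw: "\<And>c. c \<in> A \<Longrightarrow> swp c \<in> A"
  shows "card {w \<in> Wd A n. ht w < 0} = card {w \<in> Wd A n. 0 < ht w}"
proof -
  have "bij_betw mir {w \<in> Wd A n. 0 < ht w} {w \<in> Wd A n. ht w < 0}"
  proof (rule bij_betw_byWitness[of _ mir])
    show "\<forall>a\<in>{w \<in> Wd A n. 0 < ht w}. mir (mir a) = a" by simp
    show "\<forall>a'\<in>{w \<in> Wd A n. ht w < 0}. mir (mir a') = a'" by simp
    have ms: "set (mir w) \<subseteq> A" if "set w \<subseteq> A" for w
      unfolding set_mir using sw that by blast
    show "mir ` {w \<in> Wd A n. 0 < ht w} \<subseteq> {w \<in> Wd A n. ht w < 0}"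
      using ms by (auto simp: Wd_def intro: cyc_ok_mir)
    show "mir ` {w \<in> Wd A n. ht w < 0} \<subseteq> {w \<in> Wd A n. 0 < ht w}"
      using ms by (auto simp: Wd_def intro: cyc_ok_mir)
  qed
  then show ?thesis by (simp add: bij_betw_same_card)
qed

lemma Wd_split:
  assumes "finite A"
  shows "card (Wd A n) = card {w \<in> Wd A n. ht w = 0} + card {w \<in> Wd A n. 0 < ht w} + card {w \<in> Wd A n. ht w < 0}"
proof -
  have fin: "finite (Wd A n)" using assms by (rule finite_Wd)
  have "Wd A n = {w \<in> Wd A n. ht w = 0} \<union> ({w \<in> Wd A n. 0 < ht w} \<union> {w \<in> Wd A n. ht w < 0})" by auto
  then have "card (Wd A n) = card ({w \<in> Wd A n. ht w = 0} \<union> ({w \<in> Wd A n. 0 < ht w} \<union> {w \<in> Wd A n. ht w < 0}))" by simp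
  also have "\<dots> = card {w \<in> Wd A n. ht w = 0} + card ({w \<in> Wd A n. 0 < ht w} \<union> {w \<in> Wd A n. ht w < 0})"
    by (rule card_Un_disjoint) (use fin in auto)
  also have "card ({w \<in> Wd A n. 0 < ht w} \<union> {w \<in> Wd A n. ht w < 0}) = card {w \<in> Wd A n. 0 < ht w} + card {w \<in> Wd A n. ht w < 0}"
    by (rule card_Un_disjoint) (use fin in auto)
  finally show ?thesis by simp
qed


lemma Bal_Suc_eq:
  "Bal A (Suc n) =
     (\<lambda>(i,v). One i # v) ` ({i. One i \<in> A} \<times> Bal A n) \<union>
     (\<lambda>(i,j,a,b). Lam i # a @ Rho i # b) `
        (SIGMA i:{i. Lam i \<in> A \<and> Rho i \<in> A}. SIGMA j:{..<n}. Bal A j \<times> Bal A (n - 1 - j))"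
  (is "?L = ?S1 \<union> ?S2")
proof
  show "?L \<subseteq> ?S1 \<union> ?S2"
  proof
    fix u assume u: "u \<in> ?L"
    then obtain c v where uv: "u = c # v" by (cases u) (auto simp: Bal_def)
    have lv: "length v = n" and sA: "c \<in> A" "set v \<subseteq> A" and hb: "hbal (c # v)" using u uv by (auto simp: Bal_def)
    from hbal_parse[OF hb] show "u \<in> ?S1 \<union> ?S2"
    proof
      assume "\<exists>i. c = One i \<and> hbal v"
      then obtain i where i: "c = One i" "hbal v" by blast
      then have "(i, v) \<in> {i. One i \<in> A} \<times> Bal A n" using sA lv by (auto simp: Bal_def)
      then show ?thesis using uv i by (auto intro!: image_eqI[of _ _ "(i, v)"])
    next
      assume "\<exists>i a b. c = Lam i \<and> v = a @ Rho i # b \<and> hbal a \<and> hbal b"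
      then obtain i a b where i: "c = Lam i" "v = a @ Rho i # b" "hbal a" "hbal b" by blast
      have "length a < n" using lv i by simp
      moreover have "length b = n - 1 - length a" using lv i by simp
      ultimately have "(i, length a, a, b) \<in> (SIGMA i:{i. Lam i \<in> A \<and> Rho i \<in> A}. SIGMA j:{..<n}. Bal A j \<times> Bal A (n - 1 - j))"
        using sA i by (auto simp: Bal_def)
      then show ?thesis using uv i by (auto intro!: image_eqI[of _ _ "(i, length a, a, b)"])
    qed
  qed
next
  show "?S1 \<union> ?S2 \<subseteq> ?L"
  proof
    fix u assume "u \<in> ?S1 \<union> ?S2"
    then show "u \<in> ?L"
    proof
      assume "u \<in> ?S1"
      then show ?thesis by (auto simp: Bal_def intro: hbal_One)
    next
      assume "u \<in> ?S2"
      then obtain i j a b where "u = Lam i # a @ Rho i # b" "Lam i \<in> A" "Rho i \<in> A" "j < n"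
        "a \<in> Bal A j" "b \<in> Bal A (n - 1 - j)" by auto
      then show ?thesis by (auto simp: Bal_def intro: hbal_Lam)
    qed
  qed
qed

lemma Lb_Suc_eq:
  "Lb A (Suc n) =
     (\<lambda>(i,j,b,s). Lam i # b @ s) ` (SIGMA i:{i. Lam i \<in> A}. SIGMA j:{..n}. Bal A j \<times> Lb A (n - j))"
  (is "?L = ?S")
proof
  show "?L \<subseteq> ?S"
  proof
    fix u assume u: "u \<in> ?L"
    then have lu: "length u = Suc n" and sA: "set u \<subseteq> A" and hu: "hlb u" by (auto simp: Lb_def)
    then have "u \<noteq> []" by auto
    from hlb_parse[OF hu this] obtain i b s where i: "u = Lam i # b @ s" "hbal b" "hlb s" by blast
    have "length b \<le> n" "length s = n - length b" using lu i by auto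
    then have "(i, length b, b, s) \<in> (SIGMA i:{i. Lam i \<in> A}. SIGMA j:{..n}. Bal A j \<times> Lb A (n - j))"
      using sA i by (auto simp: Bal_def Lb_def)
    then show "u \<in> ?S" using i by (auto intro!: image_eqI[of _ _ "(i, length b, b, s)"])
  qed
next
  show "?S \<subseteq> ?L" by (auto simp: Bal_def Lb_def intro: hlb_Lam)
qed

lemma finite_idx: "finite A \<Longrightarrow> finite {i. f i \<in> A}" if "inj f" for f :: "nat \<Rightarrow> sym"
  using finite_vimageI[of A f] that by (simp add: vimage_def)

lemma sum_Sigma4:
  fixes h :: "nat \<times> nat \<times> 'a \<times> 'b \<Rightarrow> nat"
  assumes "finite I" "finite J" "\<And>j. finite (X j)" "\<And>j. finite (Y j)"
  shows "(\<Sum>x\<in>(SIGMA i:I. SIGMA j:J. X j \<times> Y j). h x) = (\<Sum>i\<in>I. \<Sum>j\<in>J. \<Sum>a\<in>X j. \<Sum>b\<in>Y j. h (i,j,a,b))"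
proof -
  have "(\<Sum>i\<in>I. \<Sum>j\<in>J. \<Sum>a\<in>X j. \<Sum>b\<in>Y j. h (i,j,a,b)) = (\<Sum>i\<in>I. \<Sum>j\<in>J. \<Sum>p\<in>X j \<times> Y j. h (i,j,p))"
    by (simp add: sum.cartesian_product)
  also have "\<dots> = (\<Sum>i\<in>I. \<Sum>q\<in>(SIGMA j:J. X j \<times> Y j). h (i,q))"
  proof (rule sum.cong[OF refl])
    fix i
    show "(\<Sum>j\<in>J. \<Sum>p\<in>X j \<times> Y j. h (i,j,p)) = (\<Sum>q\<in>(SIGMA j:J. X j \<times> Y j). h (i,q))"
      using sum.Sigma[of J "\<lambda>j. X j \<times> Y j" "\<lambda>j p. h (i,j,p)"] assms by (simp add: split_beta)
  qed
  also have "\<dots> = (\<Sum>x\<in>(SIGMA i:I. SIGMA j:J. X j \<times> Y j). h x)"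
    using sum.Sigma[of I "\<lambda>i. SIGMA j:J. X j \<times> Y j" "\<lambda>i q. h (i,q)"] assms by (simp add: split_beta)
  finally show ?thesis by simp
qed

lemma Bal_sum_Suc:
  fixes g :: "sym list \<Rightarrow> nat"
  assumes A: "finite A"
  shows "(\<Sum>u\<in>Bal A (Suc n). g u) =
    (\<Sum>i\<in>{i. One i \<in> A}. \<Sum>v\<in>Bal A n. g (One i # v)) +
    (\<Sum>i\<in>{i. Lam i \<in> A \<and> Rho i \<in> A}. \<Sum>j<n. \<Sum>a\<in>Bal A j. \<Sum>b\<in>Bal A (n - 1 - j). g (Lam i # a @ Rho i # b))"
proof -
  let ?I1 = "{i. One i \<in> A}" and ?I2 = "{i. Lam i \<in> A \<and> Rho i \<in> A}"
  let ?D2 = "SIGMA i:?I2. SIGMA j:{..<n}. Bal A j \<times> Bal A (n - 1 - j)"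
  let ?h1 = "\<lambda>(i,v). One i # v" and ?h2 = "\<lambda>(i,j,a,b). Lam i # a @ Rho i # b"
  have fI1: "finite ?I1" using finite_idx[of One A] A by (simp add: inj_def)
  have fI2: "finite ?I2" using finite_idx[of Lam A] A by (auto simp: inj_def intro: finite_subset[of _ "{i. Lam i \<in> A}"])
  have fB: "finite (Bal A k)" for k using A by (rule finite_Bal)
  have fD2: "finite ?D2" using fI2 fB by (intro finite_SigmaI) auto
  have inj1: "inj_on ?h1 (?I1 \<times> Bal A n)" by (auto simp: inj_on_def)
  have inj2: "inj_on ?h2 ?D2"
  proof (rule inj_onI)
    fix x y assume x: "x \<in> ?D2" and y: "y \<in> ?D2" and e: "?h2 x = ?h2 y"
    obtain i j a b where xx: "x = (i,j,a,b)" by (cases x) auto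
    obtain i' j' a' b' where yy: "y = (i',j',a',b')" by (cases y) auto
    have "hbal a" "hbal a'" "j = length a" "j' = length a'" using x y xx yy by (auto simp: Bal_def)
    moreover have "i = i'" "a @ Rho i # b = a' @ Rho i' # b'" using e xx yy by auto
    ultimately show "x = y" using hbal_split_inj[of a a' i b i' b'] xx yy by auto
  qed
  have disj: "?h1 ` (?I1 \<times> Bal A n) \<inter> ?h2 ` ?D2 = {}" by auto
  have "(\<Sum>u\<in>Bal A (Suc n). g u) = (\<Sum>u\<in>?h1 ` (?I1 \<times> Bal A n). g u) + (\<Sum>u\<in>?h2 ` ?D2. g u)"
    unfolding Bal_Suc_eq using fI1 fB fD2 disj by (intro sum.union_disjoint) auto
  also have "(\<Sum>u\<in>?h1 ` (?I1 \<times> Bal A n). g u) = (\<Sum>x\<in>?I1 \<times> Bal A n. g (?h1 x))"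
    by (rule sum.reindex[OF inj1, unfolded comp_def])
  also have "\<dots> = (\<Sum>i\<in>?I1. \<Sum>v\<in>Bal A n. g (One i # v))"
    by (simp add: sum.cartesian_product case_prod_beta)
  also have "(\<Sum>u\<in>?h2 ` ?D2. g u) = (\<Sum>x\<in>?D2. g (?h2 x))"
    by (rule sum.reindex[OF inj2, unfolded comp_def])
  also have "\<dots> = (\<Sum>i\<in>?I2. \<Sum>j<n. \<Sum>a\<in>Bal A j. \<Sum>b\<in>Bal A (n - 1 - j). g (Lam i # a @ Rho i # b))"
    using fI2 fB by (subst sum_Sigma4) auto
  finally show ?thesis .
qed

lemma Lb_sum_Suc:
  fixes g :: "sym list \<Rightarrow> nat"
  assumes A: "finite A"
  shows "(\<Sum>u\<in>Lb A (Suc n). g u) =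
    (\<Sum>i\<in>{i. Lam i \<in> A}. \<Sum>j\<le>n. \<Sum>b\<in>Bal A j. \<Sum>s\<in>Lb A (n - j). g (Lam i # b @ s))"
proof -
  let ?I = "{i. Lam i \<in> A}"
  let ?D = "SIGMA i:?I. SIGMA j:{..n}. Bal A j \<times> Lb A (n - j)"
  let ?h = "\<lambda>(i,j,b,s). Lam i # b @ s"
  have fI: "finite ?I" using finite_idx[of Lam A] A by (simp add: inj_def)
  have fB: "finite (Bal A k)" "finite (Lb A k)" for k using A by (auto intro: finite_Bal finite_Lb)
  have inj: "inj_on ?h ?D"
  proof (rule inj_onI)
    fix x y assume x: "x \<in> ?D" and y: "y \<in> ?D" and e: "?h x = ?h y"
    obtain i j b s where xx: "x = (i,j,b,s)" by (cases x) auto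
    obtain i' j' b' s' where yy: "y = (i',j',b',s')" by (cases y) auto
    have "hbal b" "hbal b'" "hlb s" "hlb s'" "j = length b" "j' = length b'" using x y xx yy by (auto simp: Bal_def Lb_def)
    moreover have "i = i'" "b @ s = b' @ s'" using e xx yy by auto
    ultimately show "x = y" using hlb_split_inj[of b b' s s'] xx yy by auto
  qed
  have "(\<Sum>u\<in>Lb A (Suc n). g u) = (\<Sum>x\<in>?D. g (?h x))"
    unfolding Lb_Suc_eq by (rule sum.reindex[OF inj, unfolded comp_def])
  also have "\<dots> = (\<Sum>i\<in>?I. \<Sum>j\<le>n. \<Sum>b\<in>Bal A j. \<Sum>s\<in>Lb A (n - j). g (Lam i # b @ s))"
    using fI fB by (subst sum_Sigma4) auto
  finally show ?thesis .
qed


lemma shift_pow: "(shift ^^ n) x = (\<lambda>i. x (i + int n))"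
  by (induction n arbitrary: x) (auto simp: shift_def fun_eq_iff algebra_simps)

lemma per_mod:
  assumes n: "0 < n" and p: "\<And>i. x (i + int n) = x i"
  shows "x i = x (i mod int n)"
proof -
  have pos: "x (j + int k * int n) = x j" for j k
  proof (induction k arbitrary: j)
    case 0 then show ?case by simp
  next
    case (Suc k)
    have "x (j + int (Suc k) * int n) = x ((j + int k * int n) + int n)" by (simp add: algebra_simps)
    also have "\<dots> = x (j + int k * int n)" by (rule p)
    finally show ?case using Suc by simp
  qed
  define q where "q = i div int n"
  define r where "r = i mod int n"
  have i: "i = r + q * int n" unfolding q_def r_def by simp
  show ?thesis
  proof (cases "0 \<le> q")
    case True
    have "x (r + int (nat q) * int n) = x r" by (rule pos)
    then have "x i = x r" using i True by simp
    then show ?thesis by (simp only: r_def)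
  next
    case False
    define k where "k = nat (- q)"
    have k: "q = - int k" using False by (simp add: k_def)
    have "i + int k * int n = r" using i k by (simp add: algebra_simps)
    moreover have "x (i + int k * int n) = x i" by (rule pos)
    ultimately have "x i = x r" by simp
    then show ?thesis by (simp only: r_def)
  qed
qed

lemma nth_concat_replicate:
  "t < k * length w \<Longrightarrow> concat (replicate k w) ! t = w ! (t mod length w)"
proof (induction k arbitrary: t)
  case 0 then show ?case by simp
next
  case (Suc k)
  show ?case
  proof (cases "t < length w")
    case True then show ?thesis by (simp add: nth_append)
  next
    case False
    then have "concat (replicate (Suc k) w) ! t = concat (replicate k w) ! (t - length w)"
      by (simp add: nth_append)
    also have "\<dots> = w ! ((t - length w) mod length w)" using Suc False by (intro Suc.IH) auto
    also have "(t - length w) mod length w = t mod length w" using False by (simp add: mod_if)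
    finally show ?thesis .
  qed
qed

definition phi :: "nat \<Rightarrow> (int \<Rightarrow> sym) \<Rightarrow> sym list" where
  "phi n x = map (\<lambda>k. x (int k)) [0..<n]"

definition psi :: "nat \<Rightarrow> sym list \<Rightarrow> (int \<Rightarrow> sym)" where
  "psi n w = (\<lambda>i. w ! nat (i mod int n))"

lemma ok_take_drop: "ok W \<Longrightarrow> ok (take L (drop d W))"
  using ok_appendD by (metis append_take_drop_id)

lemma per_count:
  assumes n: "0 < n"
  shows "periodic_count (motzkin_shift M N) n = card (Wd (alphabet M N) n)"
proof -
  let ?A = "alphabet M N"
  let ?P = "{x \<in> motzkin_shift M N. (shift ^^ n) x = x}"
  have perI: "(\<And>i. x (i + int n) = x i) \<Longrightarrow> (shift ^^ n) x = x" for x by (simp add: shift_pow)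
  have perD: "(shift ^^ n) x = x \<Longrightarrow> x (i + int n) = x i" for x i by (metis shift_pow)
  have "bij_betw (phi n) ?P (Wd ?A n)"
  proof (rule bij_betw_byWitness[of _ "psi n"])
    show "\<forall>x\<in>?P. psi n (phi n x) = x"
    proof
      fix x assume x: "x \<in> ?P"
      show "psi n (phi n x) = x"
      proof
        fix i
        have "psi n (phi n x) i = x (int (nat (i mod int n)))"
          using n by (simp add: psi_def phi_def nat_less_iff)
        also have "\<dots> = x (i mod int n)" using n by simp
        also have "\<dots> = x i" using per_mod[OF n, of x i] perD x by auto
        finally show "psi n (phi n x) i = x i" .
      qed
    qed
  next
    show "\<forall>w\<in>Wd ?A n. phi n (psi n w) = w"
    proof
      fix w assume w: "w \<in> Wd ?A n"
      then have lw: "length w = n" by (simp add: Wd_def)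
      show "phi n (psi n w) = w"
        by (rule nth_equalityI) (auto simp: phi_def psi_def lw nat_mod_distrib)
    qed
  next
    show "phi n ` ?P \<subseteq> Wd ?A n"
    proof
      fix y assume "y \<in> phi n ` ?P"
      then obtain x where x: "x \<in> ?P" "y = phi n x" by auto
      have xm: "x \<in> motzkin_shift M N" and xp: "\<And>i. x (i + int n) = x i" using x perD by auto
      have "set y \<subseteq> ?A" using xm x by (auto simp: phi_def motzkin_shift_def)
      moreover have "length y = n" using x by (simp add: phi_def)
      moreover have "ok (concat (replicate k y))" for k
      proof (cases k)
        case 0 then show ?thesis by simp
      next
        case (Suc k')
        have "concat (replicate k y) = map x [0..int (k * n) - 1]"
        proof (rule nth_equalityI)
          show "length (concat (replicate k y)) = length (map x [0..int (k * n) - 1])"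
            using \<open>length y = n\<close> by (simp add: length_concat sum_list_replicate flip: of_nat_mult)
        next
          fix t assume t: "t < length (concat (replicate k y))"
          then have tl: "t < k * n" using \<open>length y = n\<close> by (simp add: length_concat sum_list_replicate)
          have "concat (replicate k y) ! t = y ! (t mod n)"
            using nth_concat_replicate[of t k y] tl \<open>length y = n\<close> by simp
          also have "\<dots> = x (int (t mod n))"
          proof -
            have "t mod n < n" using n by simp
            then show ?thesis unfolding x(2) phi_def by simp
          qed
          also have "\<dots> = x (int t mod int n)" by (simp add: zmod_int)
          also have "\<dots> = x (int t)" using per_mod[OF n, of x "int t"] xp by simp
          also have "\<dots> = map x [0..int (k * n) - 1] ! t"
          proof -
            have tl': "int t \<le> int (k * n) - 1" using tl by linarith
            then have "[0..int (k * n) - 1] ! t = int t" by (simp add: nth_upto del: of_nat_mult)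
            moreover have "t < length [0..int (k * n) - 1]" using tl' by simp
            ultimately show ?thesis by simp
          qed
          finally show "concat (replicate k y) ! t = map x [0..int (k * n) - 1] ! t" .
        qed
        moreover have "1 \<le> k * n" using n Suc by simp
        then have "(0::int) \<le> int (k * n) - 1" by linarith
        moreover have "\<forall>i j. i \<le> j \<longrightarrow> \<not> red_is_zero (map x [i..j])" using xm by (simp add: motzkin_shift_def)
        ultimately have "\<not> red_is_zero (concat (replicate k y))" by simp
        then show ?thesis using red_is_zero_iff by blast
      qed
      ultimately show "y \<in> Wd ?A n" by (simp add: Wd_def cyc_ok_def)
    qed
  next
    show "psi n ` Wd ?A n \<subseteq> ?P"
    proof
      fix y assume "y \<in> psi n ` Wd ?A n"
      then obtain w where w: "w \<in> Wd ?A n" "y = psi n w" by auto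
      have lw: "length w = n" and sw: "set w \<subseteq> ?A" and cw: "cyc_ok w" using w by (auto simp: Wd_def)
      have yi: "y i = w ! nat (i mod int n)" for i using w by (simp add: psi_def)
      have idx: "nat (i mod int n) < n" for i using n by (simp add: nat_less_iff)
      have alph: "y i \<in> ?A" for i using yi idx sw lw by (metis nth_mem subsetD)
      have sub: "\<not> red_is_zero (map y [i..j])" if ij: "i \<le> j" for i j
      proof -
        define L where "L = nat (j - i + 1)"
        define d where "d = nat (i mod int n)"
        define W where "W = concat (replicate (L + 1) w)"
        have okW: "ok W" using cw unfolding cyc_ok_def W_def by blast
        have dn: "d < n" using idx by (simp add: d_def)
        have lW: "length W = (L + 1) * n" using lw by (simp add: W_def length_concat sum_list_replicate)
        have Ln: "L * 1 \<le> L * n" using n by (intro mult_le_mono2) simp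
        have LnE: "(L + 1) * n = L * n + n" by (simp add: algebra_simps)
        have "map y [i..j] = take L (drop d W)"
        proof (rule nth_equalityI)
          have "d + L \<le> (L + 1) * n" using dn Ln LnE by linarith
          then show "length (map y [i..j]) = length (take L (drop d W))" using lW by (simp add: L_def)
        next
          fix t assume t: "t < length (map y [i..j])"
          then have tL: "t < L" by (simp add: L_def)
          have "map y [i..j] ! t = y (i + int t)" using t by (simp add: nth_upto)
          also have "\<dots> = w ! nat ((i + int t) mod int n)" by (rule yi)
          also have "nat ((i + int t) mod int n) = (d + t) mod n"
          proof -
            have "(i + int t) mod int n = (i mod int n + int t) mod int n" by (simp add: mod_add_left_eq)
            also have "i mod int n = int d" using n by (simp add: d_def)
            also have "(int d + int t) mod int n = int ((d + t) mod n)" by (simp add: zmod_int)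
            finally show ?thesis by simp
          qed
          also have "w ! ((d + t) mod n) = W ! (d + t)"
          proof -
            have "d + t < (L + 1) * n" using dn tL Ln LnE by linarith
            then show ?thesis using nth_concat_replicate[of "d+t" "L+1" w] lw by (simp add: W_def)
          qed
          also have "\<dots> = take L (drop d W) ! t"
          proof -
            have "d \<le> length W" using lW dn Ln LnE by linarith
            then show ?thesis using tL by (simp add: nth_drop)
          qed
          finally show "map y [i..j] ! t = take L (drop d W) ! t" .
        qed
        then have "ok (map y [i..j])" using ok_take_drop[OF okW] by simp
        then show ?thesis using red_is_zero_iff by simp
      qed
      have "y \<in> motzkin_shift M N" using alph sub by (auto simp: motzkin_shift_def)
      moreover have "y (i + int n) = y i" for i using yi by simp
      ultimately show "y \<in> ?P" using perI by auto
    qed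
  qed
  then show ?thesis unfolding periodic_count_def by (rule bij_betw_same_card)
qed


lemma alph_finite: "finite (alphabet M N)"
proof -
  have "alphabet M N = Lam ` {1..M} \<union> Rho ` {1..M} \<union> One ` {1..N}"
    by (auto simp: alphabet_def)
  then show ?thesis by simp
qed

lemma alph_One: "{i. One i \<in> alphabet M N} = {1..N}" by (auto simp: alphabet_def)
lemma alph_LR: "{i. Lam i \<in> alphabet M N \<and> Rho i \<in> alphabet M N} = {1..M}" by (auto simp: alphabet_def)
lemma alph_L: "{i. Lam i \<in> alphabet M N} = {1..M}" by (auto simp: alphabet_def)
lemma alph_swp: "c \<in> alphabet M N \<Longrightarrow> swp c \<in> alphabet M N" by (cases c) (auto simp: alphabet_def)

abbreviation "bc M N n \<equiv> card (Bal (alphabet M N) n)"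
abbreviation "lc M N n \<equiv> card (Lb (alphabet M N) n)"

lemma Bal_0: "Bal A 0 = {[]}" by (auto simp: Bal_def)
lemma Lb_0: "Lb A 0 = {[]}" by (auto simp: Lb_def)

lemma K1: "bc M N (Suc n) = N * bc M N n + M * (\<Sum>j<n. bc M N j * bc M N (n - 1 - j))"
proof -
  have "bc M N (Suc n) = (\<Sum>u\<in>Bal (alphabet M N) (Suc n). 1)" by simp
  also have "\<dots> = N * bc M N n + M * (\<Sum>j<n. bc M N j * bc M N (n - 1 - j))"
    using Bal_sum_Suc[OF alph_finite, where g = "\<lambda>_. 1" and n = n] by (simp add: alph_One alph_LR sum_distrib_left)
  finally show ?thesis .
qed

lemma K2: "(\<Sum>u\<in>Bal (alphabet M N) (Suc n). fp u) = N * bc M N n + M * (\<Sum>j<n. (j + 2) * bc M N j * bc M N (n - 1 - j))"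
proof -
  have a: "(\<Sum>v\<in>Bal (alphabet M N) n. fp (One i # v)) = bc M N n" for i
    by (simp add: Bal_def fp_One)
  have b: "(\<Sum>a\<in>Bal (alphabet M N) j. \<Sum>b\<in>Bal (alphabet M N) (n - 1 - j). fp (Lam i # a @ Rho i # b))
      = (j + 2) * bc M N j * bc M N (n - 1 - j)" for i j
  proof -
    have "(\<Sum>a\<in>Bal (alphabet M N) j. \<Sum>b\<in>Bal (alphabet M N) (n - 1 - j). fp (Lam i # a @ Rho i # b))
       = (\<Sum>a\<in>Bal (alphabet M N) j. \<Sum>b\<in>Bal (alphabet M N) (n - 1 - j). j + 2)"
      by (intro sum.cong refl) (auto simp: Bal_def fp_Lam)
    then show ?thesis by (simp add: algebra_simps)
  qed
  show ?thesis unfolding Bal_sum_Suc[OF alph_finite] alph_One alph_LR a b by (simp add: sum_distrib_left)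
qed

lemma K3: "lc M N (Suc n) = M * (\<Sum>j\<le>n. bc M N j * lc M N (n - j))"
proof -
  have "lc M N (Suc n) = (\<Sum>u\<in>Lb (alphabet M N) (Suc n). 1)" by simp
  also have "\<dots> = M * (\<Sum>j\<le>n. bc M N j * lc M N (n - j))"
    using Lb_sum_Suc[OF alph_finite, where g = "\<lambda>_. 1" and n = n] by (simp add: alph_L sum_distrib_left)
  finally show ?thesis .
qed

lemma K4: "(\<Sum>u\<in>Lb (alphabet M N) (Suc n). fb u) = M * (\<Sum>j\<le>n. (j + 1) * bc M N j * lc M N (n - j))"
proof -
  have b: "(\<Sum>b\<in>Bal (alphabet M N) j. \<Sum>s\<in>Lb (alphabet M N) (n - j). fb (Lam i # b @ s))
      = (j + 1) * bc M N j * lc M N (n - j)" for i j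
  proof -
    have "(\<Sum>b\<in>Bal (alphabet M N) j. \<Sum>s\<in>Lb (alphabet M N) (n - j). fb (Lam i # b @ s))
       = (\<Sum>b\<in>Bal (alphabet M N) j. \<Sum>s\<in>Lb (alphabet M N) (n - j). j + 1)"
      by (intro sum.cong refl) (auto simp: Bal_def Lb_def fb_Lam)
    then show ?thesis by (simp add: algebra_simps)
  qed
  show ?thesis unfolding Lb_sum_Suc[OF alph_finite] alph_L b by (simp add: sum_distrib_left)
qed

lemma pcount: "periodic_count (motzkin_shift M N) (Suc n) =
   (\<Sum>u\<in>Bal (alphabet M N) (Suc n). fp u) + 2 * (\<Sum>u\<in>Lb (alphabet M N) (Suc n). fb u)"
proof -
  let ?A = "alphabet M N"
  have "periodic_count (motzkin_shift M N) (Suc n) = card (Wd ?A (Suc n))" by (rule per_count) simp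
  also have "\<dots> = card {w \<in> Wd ?A (Suc n). ht w = 0} + card {w \<in> Wd ?A (Suc n). 0 < ht w} + card {w \<in> Wd ?A (Suc n). ht w < 0}"
    by (rule Wd_split[OF alph_finite])
  also have "card {w \<in> Wd ?A (Suc n). ht w < 0} = card {w \<in> Wd ?A (Suc n). 0 < ht w}"
    by (rule Wm_count) (rule alph_swp)
  also have "card {w \<in> Wd ?A (Suc n). ht w = 0} = (\<Sum>u\<in>Bal ?A (Suc n). fp u)"
    by (rule W0_count[OF alph_finite]) simp
  also have "card {w \<in> Wd ?A (Suc n). 0 < ht w} = (\<Sum>u\<in>Lb ?A (Suc n). fb u)"
    by (rule Wp_count[OF alph_finite]) simp
  finally show ?thesis by simp
qed




definition Bf :: "nat \<Rightarrow> nat \<Rightarrow> real fps" where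
  "Bf M N = Abs_fps (\<lambda>n. real (bc M N n))"
definition Tf :: "nat \<Rightarrow> nat \<Rightarrow> real fps" where
  "Tf M N = Abs_fps (\<lambda>n. real (lc M N n))"
definition Lf :: "nat \<Rightarrow> nat \<Rightarrow> real fps" where
  "Lf M N = Abs_fps (\<lambda>n. if n = 0 then 0 else real (periodic_count (motzkin_shift M N) n) / real n)"
definition Df :: "nat \<Rightarrow> nat \<Rightarrow> real fps" where
  "Df M N = Abs_fps (\<lambda>j. real (j + 2) * real (bc M N j))"
definition Ef :: "nat \<Rightarrow> nat \<Rightarrow> real fps" where
  "Ef M N = Abs_fps (\<lambda>j. real (j + 1) * real (bc M N j))"

lemma bc0: "bc M N 0 = 1" by (simp add: Bal_0)
lemma lc0: "lc M N 0 = 1" by (simp add: Lb_0)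

lemma sum_lessThan_Suc_conv: "(\<Sum>j<Suc k. f j) = (\<Sum>j=0..k. f j)"
  by (simp add: lessThan_Suc_atMost atLeast0AtMost)

lemma E1: "Bf M N = 1 + fps_X * (fps_const (real N) * Bf M N + fps_const (real M) * (fps_X * (Bf M N * Bf M N)))"
proof (rule fps_ext)
  fix n
  show "Bf M N $ n = (1 + fps_X * (fps_const (real N) * Bf M N + fps_const (real M) * (fps_X * (Bf M N * Bf M N)))) $ n"
  proof (cases n)
    case 0 then show ?thesis by (simp add: Bf_def bc0)
  next
    case (Suc m)
    have "real (bc M N (Suc m)) = real N * real (bc M N m) + real M * (fps_X * (Bf M N * Bf M N)) $ m"
    proof (cases m)
      case 0 then show ?thesis by (simp add: K1)
    next
      case (Suc k)
      have "real (bc M N (Suc m)) = real N * real (bc M N m) + real M * (\<Sum>j<m. real (bc M N j) * real (bc M N (m - 1 - j)))"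
        by (simp only: K1 of_nat_add of_nat_mult of_nat_sum)
      also have "(\<Sum>j<m. real (bc M N j) * real (bc M N (m - 1 - j))) = (fps_X * (Bf M N * Bf M N)) $ m"
      proof -
        have "(fps_X * (Bf M N * Bf M N)) $ m = (Bf M N * Bf M N) $ k" using Suc by simp
        also have "\<dots> = (\<Sum>j=0..k. real (bc M N j) * real (bc M N (k - j)))" by (simp add: fps_mult_nth Bf_def)
        finally show ?thesis using Suc by (simp add: sum_lessThan_Suc_conv del: sum.lessThan_Suc)
      qed
      finally show ?thesis .
    qed
    then show ?thesis using Suc by (simp add: Bf_def)
  qed
qed

lemma E2: "Tf M N = 1 + fps_X * (fps_const (real M) * (Bf M N * Tf M N))"
proof (rule fps_ext)
  fix n
  show "Tf M N $ n = (1 + fps_X * (fps_const (real M) * (Bf M N * Tf M N))) $ n"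
  proof (cases n)
    case 0 then show ?thesis by (simp add: Tf_def lc0)
  next
    case (Suc m)
    have "real (lc M N (Suc m)) = real M * (\<Sum>j\<le>m. real (bc M N j) * real (lc M N (m - j)))"
      by (simp only: K3 of_nat_add of_nat_mult of_nat_sum)
    also have "(\<Sum>j\<le>m. real (bc M N j) * real (lc M N (m - j))) = (Bf M N * Tf M N) $ m"
      by (simp add: fps_mult_nth Bf_def Tf_def atLeast0AtMost)
    finally show ?thesis using Suc by (simp add: Tf_def)
  qed
qed

lemma E3: "fps_deriv (Lf M N) = fps_const (real N) * Bf M N + fps_const (real M) * (fps_X * (Df M N * Bf M N))
    + fps_const (2 * real M) * (Ef M N * Tf M N)"
proof (rule fps_ext)
  fix k
  have "fps_deriv (Lf M N) $ k = real (periodic_count (motzkin_shift M N) (Suc k))"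
    by (simp add: Lf_def del: of_nat_Suc)
  also have "\<dots> = real (\<Sum>u\<in>Bal (alphabet M N) (Suc k). fp u) + 2 * real (\<Sum>u\<in>Lb (alphabet M N) (Suc k). fb u)"
    by (simp add: pcount)
  also have "real (\<Sum>u\<in>Bal (alphabet M N) (Suc k). fp u) = real N * real (bc M N k) + real M * (\<Sum>j<k. real (j + 2) * real (bc M N j) * real (bc M N (k - 1 - j)))"
    by (simp only: K2 of_nat_add of_nat_mult of_nat_sum)
  also have "(\<Sum>j<k. real (j + 2) * real (bc M N j) * real (bc M N (k - 1 - j))) = (fps_X * (Df M N * Bf M N)) $ k"
  proof (cases k)
    case 0 then show ?thesis by simp
  next
    case (Suc k')
    have "(fps_X * (Df M N * Bf M N)) $ k = (Df M N * Bf M N) $ k'" using Suc by simp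
    also have "\<dots> = (\<Sum>j=0..k'. real (j + 2) * real (bc M N j) * real (bc M N (k' - j)))" by (simp add: fps_mult_nth Df_def Bf_def)
    finally show ?thesis using Suc by (simp add: sum_lessThan_Suc_conv del: sum.lessThan_Suc)
  qed
  also have "real (\<Sum>u\<in>Lb (alphabet M N) (Suc k). fb u) = real M * (\<Sum>j\<le>k. real (j + 1) * real (bc M N j) * real (lc M N (k - j)))"
    by (simp only: K4 of_nat_add of_nat_mult of_nat_sum)
  also have "(\<Sum>j\<le>k. real (j + 1) * real (bc M N j) * real (lc M N (k - j))) = (Ef M N * Tf M N) $ k"
    by (simp add: fps_mult_nth Ef_def Tf_def atLeast0AtMost)
  finally show "fps_deriv (Lf M N) $ k = (fps_const (real N) * Bf M N + fps_const (real M) * (fps_X * (Df M N * Bf M N))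
    + fps_const (2 * real M) * (Ef M N * Tf M N)) $ k"
    by (simp add: Bf_def)
qed

lemma E4: "Df M N = fps_const 2 * Bf M N + fps_X * fps_deriv (Bf M N)"
  by (rule fps_ext) (auto simp: Df_def Bf_def algebra_simps)

lemma E5: "Ef M N = Bf M N + fps_X * fps_deriv (Bf M N)"
  by (rule fps_ext) (auto simp: Ef_def Bf_def algebra_simps)

lemma alg1: fixes b b' x n m d :: "'a::idom"
  assumes "b * (1 - x*(n + m*x*b)) = 1" "b' * (1 - x*(n + m*x*b)) + b * (-(n + m*x*b) - x*(m*b + m*x*b')) = 0" "d = 2*b + x*b'"
  shows "b' = b^2 * (n + m*x*d)"
  using assms by algebra

lemma alg2: fixes t t' b b' x m e :: "'a::idom"
  assumes "t * (1 - m*x*b) = 1" "t' * (1 - m*x*b) + t * (-(m*b + m*x*b')) = 0" "e = b + x*b'"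
  shows "t' = t^2 * m * e"
  using assms by algebra

lemma alg3: fixes t t' b b' x m n d e :: "'a::idom"
  assumes "b' = b^2 * (n + m*x*d)" "t' = t^2 * m * e"
  shows "b' * t^2 + b * (2 * t * t') = (b * t^2) * (n * b + m * (x * (d * b)) + 2 * m * (e * t))"
  using assms by algebra

lemma alg4: fixes b x n m :: "'a::idom"
  assumes "b * (1 - x*(n + m*x*b)) = 1"
  shows "(1 - n*x - 2*m*x^2*b)^2 = (1 - n*x)^2 - 4*m*x^2"
  using assms by algebra

lemma alg5: fixes b t x n m s :: "'a::idom"
  assumes "b * (1 - x*(n + m*x*b)) = 1" "t * (1 - m*x*b) = 1" "s = 1 - n*x - 2*m*x^2*b"
  shows "b * ((b * t^2) * (1 - (2*m + n)*x + s)^2 - 2*(1 - n*x + s)) = 0"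
  using assms by algebra

lemma aux_sub: "(a::'a::ab_group_add) = c + g \<Longrightarrow> a - g = c" by simp

lemma ode_unique:
  fixes F H D :: "real fps"
  assumes "fps_deriv F = F * D" "fps_deriv H = H * D" "F $ 0 = H $ 0"
  shows "F = H"
proof -
  have "\<forall>m\<le>n. F $ m = H $ m" for n
  proof (induction n)
    case 0 then show ?case using assms(3) by simp
  next
    case (Suc n)
    have "real (Suc n) * F $ Suc n = (F * D) $ n" using arg_cong[OF assms(1), of "\<lambda>f. f $ n"] by simp
    moreover have "real (Suc n) * H $ Suc n = (H * D) $ n" using arg_cong[OF assms(2), of "\<lambda>f. f $ n"] by simp
    moreover have "(F * D) $ n = (H * D) $ n" using Suc by (simp add: fps_mult_nth)
    ultimately have "F $ Suc n = H $ Suc n" by (metis mult_cancel_left of_nat_eq_0_iff nat.distinct(1))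
    then show ?case using Suc le_Suc_eq by auto
  qed
  then show ?thesis by (intro fps_ext) blast
qed

lemma main_eq:
  fixes M N :: nat
  shows "zeta_fps (motzkin_shift M N) = Bf M N * (Tf M N)^2"
proof -
  let ?X = "fps_X :: real fps"
  let ?n = "fps_const (real N)" and ?m = "fps_const (real M)"
  let ?B = "Bf M N" and ?T = "Tf M N" and ?L = "Lf M N" and ?D = "Df M N" and ?E = "Ef M N"
  have BQ: "?B * (1 - ?X * (?n + ?m * ?X * ?B)) = 1"
  proof -
    have "?B - ?X * (?n * ?B + ?m * (?X * (?B * ?B))) = 1" by (rule aux_sub[OF E1])
    then show ?thesis by (simp add: algebra_simps)
  qed
  have TQ: "?T * (1 - ?m * ?X * ?B) = 1"
  proof -
    have "?T - ?X * (?m * (?B * ?T)) = 1" by (rule aux_sub[OF E2])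
    then show ?thesis by (simp add: algebra_simps)
  qed
  have dB: "fps_deriv ?B * (1 - ?X * (?n + ?m * ?X * ?B)) + ?B * (-(?n + ?m * ?X * ?B) - ?X * (?m * ?B + ?m * ?X * fps_deriv ?B)) = 0"
  proof -
    have "fps_deriv (?B * (1 - ?X * (?n + ?m * ?X * ?B))) = 0" by (simp only: BQ) simp
    moreover have "fps_deriv (?B * (1 - ?X * (?n + ?m * ?X * ?B))) = fps_deriv ?B * (1 - ?X * (?n + ?m * ?X * ?B)) + ?B * (-(?n + ?m * ?X * ?B) - ?X * (?m * ?B + ?m * ?X * fps_deriv ?B))"
      by (simp add: algebra_simps del: fps_const_neg)
    ultimately show ?thesis by simp
  qed
  have dT: "fps_deriv ?T * (1 - ?m * ?X * ?B) + ?T * (-(?m * ?B + ?m * ?X * fps_deriv ?B)) = 0"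
  proof -
    have "fps_deriv (?T * (1 - ?m * ?X * ?B)) = 0" by (simp only: TQ) simp
    moreover have "fps_deriv (?T * (1 - ?m * ?X * ?B)) = fps_deriv ?T * (1 - ?m * ?X * ?B) + ?T * (-(?m * ?B + ?m * ?X * fps_deriv ?B))"
      by (simp add: algebra_simps del: fps_const_neg)
    ultimately show ?thesis by simp
  qed
  have D2: "?D = 2 * ?B + ?X * fps_deriv ?B" using E4 by (simp add: numeral_fps_const)
  have B': "fps_deriv ?B = ?B^2 * (?n + ?m * ?X * ?D)" by (rule alg1[OF BQ dB D2])
  have T': "fps_deriv ?T = ?T^2 * ?m * ?E" by (rule alg2[OF TQ dT E5])
  have Yd: "fps_deriv (?B * ?T^2) = (?B * ?T^2) * fps_deriv ?L"
  proof -
    have "fps_deriv (?B * ?T^2) = fps_deriv ?B * ?T^2 + ?B * (2 * ?T * fps_deriv ?T)"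
      by (simp add: power2_eq_square algebra_simps)
    also have "\<dots> = (?B * ?T^2) * (?n * ?B + ?m * (?X * (?D * ?B)) + 2 * ?m * (?E * ?T))"
      by (rule alg3[OF B' T'])
    also have "?n * ?B + ?m * (?X * (?D * ?B)) + 2 * ?m * (?E * ?T) = fps_deriv ?L"
    proof -
      have c2: "fps_const (2 * real M) = 2 * ?m" by (simp add: numeral_fps_const)
      show ?thesis unfolding E3 c2 by (simp add: algebra_simps)
    qed
    finally show ?thesis .
  qed
  have L0: "?L $ 0 = 0" by (simp add: Lf_def)
  have Zd: "fps_deriv (fps_exp 1 oo ?L) = (fps_exp 1 oo ?L) * fps_deriv ?L"
    by (simp add: fps_compose_deriv[OF L0])
  have Z0: "(fps_exp 1 oo ?L) $ 0 = (?B * ?T^2) $ 0"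
    by (simp add: Bf_def Tf_def bc0 lc0 power2_eq_square)
  have "fps_exp 1 oo ?L = ?B * ?T^2" by (rule ode_unique[OF Zd Yd Z0])
  moreover have "zeta_fps (motzkin_shift M N) = fps_exp 1 oo ?L" by (simp add: zeta_fps_def Lf_def)
  ultimately show ?thesis by simp
qed

lemma BQ: "Bf M N * (1 - fps_X * (of_nat N + of_nat M * fps_X * Bf M N)) = 1"
proof -
  have "Bf M N - fps_X * (fps_const (real N) * Bf M N + fps_const (real M) * (fps_X * (Bf M N * Bf M N))) = 1"
    by (rule aux_sub[OF E1])
  then show ?thesis by (simp add: algebra_simps fps_of_nat[symmetric])
qed

lemma TQ: "Tf M N * (1 - of_nat M * fps_X * Bf M N) = 1"
proof -
  have "Tf M N - fps_X * (fps_const (real M) * (Bf M N * Tf M N)) = 1" by (rule aux_sub[OF E2])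
  then show ?thesis by (simp add: algebra_simps fps_of_nat[symmetric])
qed

lemma fps_sq_0: "((f :: real fps)^2) $ 0 = (f $ 0)^2"
  by (simp add: power2_eq_square)

theorem proposition2p2:
  fixes M N :: nat
  defines "z \<equiv> (fps_X :: real fps)"
  defines "S \<equiv> fps_sqrt1 ((1 - of_nat N * z)^2 - 4 * of_nat M * z^2)"
  shows "zeta_fps (motzkin_shift M N) =
    2 * (1 - of_nat N * z + S) / (1 - (2 * of_nat M + of_nat N) * z + S)^2"
proof -
  let ?B = "Bf M N" and ?T = "Tf M N"
  let ?n = "of_nat N :: real fps" and ?m = "of_nat M :: real fps"
  define b where "b = (1 - ?n * z)^2 - 4 * ?m * z^2"
  define a where "a = 1 - ?n * z - 2 * ?m * z^2 * ?B"
  have B0: "?B $ 0 = 1" by (simp add: Bf_def bc0)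
  have bq: "?B * (1 - z * (?n + ?m * z * ?B)) = 1" unfolding z_def by (rule BQ)
  have tq: "?T * (1 - ?m * z * ?B) = 1" unfolding z_def by (rule TQ)
  have b0: "b $ 0 = 1"
    by (simp add: b_def z_def fps_sq_0 fps_of_nat[symmetric] numeral_fps_const)
  have a0: "a $ 0 = 1"
    by (simp add: a_def z_def fps_of_nat[symmetric] numeral_fps_const power2_eq_square)
  have "a ^ 2 = b" unfolding a_def b_def by (rule alg4[OF bq])
  moreover have "a ^ Suc 1 = b \<longleftrightarrow> a = fps_radical (\<lambda>_ x. sqrt x) (Suc 1) b"
    by (rule radical_unique) (use b0 a0 in simp_all)
  ultimately have "a = fps_radical (\<lambda>_ x. sqrt x) 2 b" by (simp add: numeral_2_eq_2)
  then have Sa: "S = a" by (simp add: S_def fps_sqrt1_def b_def)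
  define Den where "Den = 1 - (2 * ?m + ?n) * z + S"
  define Num where "Num = 2 * (1 - ?n * z + S)"
  define Y where "Y = ?B * ?T^2"
  have "?B * (Y * Den^2 - Num) = 0" unfolding Y_def Den_def Num_def
    by (rule alg5[OF bq tq Sa[unfolded a_def]])
  moreover have "?B \<noteq> 0" using B0 by auto
  ultimately have YD: "Y * Den^2 = Num" by simp
  have "Den $ 0 = 2" using a0 Sa
    by (simp add: Den_def z_def fps_of_nat[symmetric] numeral_fps_const)
  then have "Den \<noteq> 0" by auto
  then have "Den^2 \<noteq> 0" by simp
  then have "Num / Den^2 = Y" using YD by (metis nonzero_mult_div_cancel_right)
  then show ?thesis using main_eq[of M N] by (simp add: Y_def Num_def Den_def)
qed


end
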